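(* In the setting described in the context, assume there is a map $\beta\colon\Gamma\to\mathrm M_{\mathcal U}$ with $\alpha(g,h)=\varphi_{\mathcal U}(g)\beta(h)\varphi_{\mathcal U}(g)^*-\beta(gh)+\beta(g)$ for all $g,h\in\Gamma$. Then $\beta(1_\Gamma)=0$, $\beta(g)=-\varphi_{\mathcal U}(g)\beta(g^{-1})\varphi_{\mathcal U}(g)^*$, and $c(g,h)=\varphi_{\mathcal U}(g)\beta(h)\varphi_{\mathcal U}(h)-\beta(gh)\varphi_{\mathcal U}(gh)+\beta(g)\varphi_{\mathcal U}(gh)$ for all $g,h\in\Gamma$. Furthermore, such a $\beta$ (satisfying the displayed equation for $\alpha$) can be chosen so that $\beta(g)^*=-\beta(g)$ for all $g\in\Gamma$.
   Context: Fix a non-principal ultrafilter $\mathcal U$ on $\mathbb N$; $x_n=O_{\mathcal U}(y_n)$ means $x_n\le Cy_n$ for all $n$ in a set belonging to $\mathcal U$, for some constant $C$. Let $\Gamma=\langle S\mid R\rangle$ be finitely presented ($S,R$ finite, $\mathbb F_S$ free on $S$). For each $k$ fix a unitarily invariant, submultiplicative norm $\|\cdot\|$ on $\mathrm M_k(\mathbb C)$. For $\varphi\colon S\to\mathrm U(k)$ (extended to $\mathbb F_S$), $\mathrm{def}(\varphi)=\max_{r\in R}\|\varphi(r)-1_k\|$. Let $\varphi_n\colon S\to\mathrm U(k_n)$ with $\lim_{n\to\mathcal U}\mathrm{def}(\varphi_n)=0$. Let $\mathrm M_{\mathcal U}$ be the Banach space of bounded sequences $(T_n)$, $T_n\in\mathrm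 M_{k_n}(\mathbb C)$, modulo those with $\lim_{n\to\mathcal U}\|T_n\|=0$ (with adjoint taken entrywise), and $\mathrm U_{\mathcal U}$ the group $\prod_n\mathrm U(k_n)$ modulo sequences with $\lim_{n\to\mathcal U}\|u_n-1_{k_n}\|=0$, acting on $\mathrm M_{\mathcal U}$ by left and right multiplication. Let $\varphi_{\mathcal U}\colon\Gamma\to\mathrm U_{\mathcal U}$ be the induced homomorphism ($g\mapsto$ class of $(\varphi_n(w))_n$, $w$ any word representing $g$). Fix a section $\sigma\colon\Gamma\to\mathbb F_S$ of the canonical surjection and maps $\tilde\varphi_n\colon\Gamma\to\mathrm U(k_n)$ with $\tilde\varphi_n(1_\Gamma)=1$, $\tilde\varphi_n(g^{-1})=\tilde\varphi_n(g)^*$, $\|\varphi_n(\sigma(g))-\tilde\varphi_n(g)\|=O_{\mathcal U}(\mathrm{def}(\varphi_n))$. Let $c_n(g,h)=(\tilde\varphi_n(g)\tilde\varphi_n(h)-\tilde\varphi_n(gh))/\mathrm{def}(\varphi_n)$ if $\mathrm{def}(\varphi_n)>0$, else $0$; $c(g,h)\in\mathrm M_{\mathcal U}$ is the class of this ($O_{\mathcal U}(1)$-bounded) sequence, and $\alpha(g,h)=c(g,h)\varphi_{\mathcal U}(gh)^*$. *)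

theory Defs
  imports "HOL-Analysis.Analysis" "HOL-Algebra.Group" "Jordan_Normal_Form.Schur_Decomposition"
begin

definition nonprincipal_ultrafilter :: "nat filter \<Rightarrow> bool" where
  "nonprincipal_ultrafilter U \<longleftrightarrow>
     U \<noteq> bot \<and> (\<forall>P. eventually P U \<or> eventually (\<lambda>n. \<not> P n) U)
     \<and> (\<forall>m. \<not> eventually (\<lambda>n. n = m) U)"

text \<open>A word over S is a list of letters (s, e); e = True means the inverse letter.\<close>
type_synonym 's word = "('s \<times> bool) list"

definition words :: "'s set \<Rightarrow> 's word set" where
  "words S = {w. \<forall>x\<in>set w. fst x \<in> S}"

definition pres_step :: "'s set \<Rightarrow> 's word set \<Rightarrow> 's word \<Rightarrow> 's word \<Rightarrow> bool" where
  "pres_step S R u v \<longleftrightarrow>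
     (\<exists>a b s e. s \<in> S \<and> u = a @ [(s,e),(s,\<not>e)] @ b \<and> v = a @ b) \<or>
     (\<exists>a b r. r \<in> R \<and> u = a @ r @ b \<and> v = a @ b)"

definition eval_word :: "('g, 'm) monoid_scheme \<Rightarrow> ('s \<Rightarrow> 'g) \<Rightarrow> 's word \<Rightarrow> 'g" where
  "eval_word G gen w = foldr (\<lambda>(s,e) acc. (if e then inv\<^bsub>G\<^esub> (gen s) else gen s) \<otimes>\<^bsub>G\<^esub> acc) w \<one>\<^bsub>G\<^esub>"

text \<open>G is the group presented by generators S and relators R, via gen (the canonical surjection
  from the free group on S is w \<mapsto> eval_word G gen w).\<close>
definition is_presentation :: "('g, 'm) monoid_scheme \<Rightarrow> 's set \<Rightarrow> 's word set \<Rightarrow> ('s \<Rightarrow> 'g) \<Rightarrow> bool" where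
  "is_presentation G S R gen \<longleftrightarrow>
     group G \<and> gen \<in> S \<rightarrow> carrier G \<and> R \<subseteq> words S \<and>
     (\<forall>g\<in>carrier G. \<exists>w\<in>words S. eval_word G gen w = g) \<and>
     (\<forall>w\<in>words S. \<forall>w'\<in>words S.
        eval_word G gen w = eval_word G gen w' \<longleftrightarrow> equivclp (pres_step S R) w w')"

definition unitary_mat :: "nat \<Rightarrow> complex mat \<Rightarrow> bool" where
  "unitary_mat k U \<longleftrightarrow> U \<in> carrier_mat k k \<and> U * mat_adjoint U = 1\<^sub>m k \<and> mat_adjoint U * U = 1\<^sub>m k"

definition ui_submult_norm :: "(complex mat \<Rightarrow> real) \<Rightarrow> bool" where
  "ui_submult_norm nrm \<longleftrightarrow>
    (\<forall>k. \<forall>A\<in>carrier_mat k k. \<forall>B\<in>carrier_mat k k.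
        (nrm A = 0 \<longleftrightarrow> A = 0\<^sub>m k k) \<and>
        nrm (A + B) \<le> nrm A + nrm B \<and>
        (\<forall>a. nrm (a \<cdot>\<^sub>m A) = cmod a * nrm A) \<and>
        nrm (A * B) \<le> nrm A * nrm B \<and>
        (\<forall>P Q. unitary_mat k P \<longrightarrow> unitary_mat k Q \<longrightarrow> nrm (P * A * Q) = nrm A))"

definition mat_word :: "nat \<Rightarrow> ('s \<Rightarrow> complex mat) \<Rightarrow> 's word \<Rightarrow> complex mat" where
  "mat_word k f w = foldr (\<lambda>(s,e) acc. (if e then mat_adjoint (f s) else f s) * acc) w (1\<^sub>m k)"

text \<open>Defect: maximum over relators (0 if R is empty; norms are nonnegative).\<close>
definition defect :: "(complex mat \<Rightarrow> real) \<Rightarrow> 's word set \<Rightarrow> nat \<Rightarrow> ('s \<Rightarrow> complex mat) \<Rightarrow> real" where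
  "defect nrm R k f = Max (insert 0 ((\<lambda>r. nrm (mat_word k f r - 1\<^sub>m k)) ` R))"

text \<open>Elements of M_U are represented by bounded sequences T_n \<in> M_{k_n}(C).\<close>
definition MU_seq :: "(complex mat \<Rightarrow> real) \<Rightarrow> (nat \<Rightarrow> nat) \<Rightarrow> (nat \<Rightarrow> complex mat) \<Rightarrow> bool" where
  "MU_seq nrm k T \<longleftrightarrow> (\<forall>n. T n \<in> carrier_mat (k n) (k n)) \<and> (\<exists>C. \<forall>n. nrm (T n) \<le> C)"

text \<open>Equality of the classes in M_U.\<close>
definition eqU :: "nat filter \<Rightarrow> (complex mat \<Rightarrow> real) \<Rightarrow> (nat \<Rightarrow> complex mat) \<Rightarrow> (nat \<Rightarrow> complex mat) \<Rightarrow> bool" where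
  "eqU U nrm A B \<longleftrightarrow> ((\<lambda>n. nrm (A n - B n)) \<longlongrightarrow> 0) U"

text \<open>Representative of \<phi>_U(g): the sequence \<phi>_n(\<sigma>(g)).\<close>
definition phiU :: "(nat \<Rightarrow> nat) \<Rightarrow> (nat \<Rightarrow> 's \<Rightarrow> complex mat) \<Rightarrow> ('g \<Rightarrow> 's word) \<Rightarrow> 'g \<Rightarrow> nat \<Rightarrow> complex mat" where
  "phiU k \<phi> \<sigma> g n = mat_word (k n) (\<phi> n) (\<sigma> g)"

definition c_seq :: "('g, 'm) monoid_scheme \<Rightarrow> (complex mat \<Rightarrow> real) \<Rightarrow> 's word set \<Rightarrow> (nat \<Rightarrow> nat)
    \<Rightarrow> (nat \<Rightarrow> 's \<Rightarrow> complex mat) \<Rightarrow> (nat \<Rightarrow> 'g \<Rightarrow> complex mat) \<Rightarrow> 'g \<Rightarrow> 'g \<Rightarrow> nat \<Rightarrow> complex mat" where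
  "c_seq G nrm R k \<phi> \<phi>t g h n =
     (if defect nrm R (k n) (\<phi> n) > 0
      then (1 / complex_of_real (defect nrm R (k n) (\<phi> n))) \<cdot>\<^sub>m
             (\<phi>t n g * \<phi>t n h - \<phi>t n (g \<otimes>\<^bsub>G\<^esub> h))
      else 0\<^sub>m (k n) (k n))"

definition alpha_seq :: "('g, 'm) monoid_scheme \<Rightarrow> (complex mat \<Rightarrow> real) \<Rightarrow> 's word set \<Rightarrow> (nat \<Rightarrow> nat)
    \<Rightarrow> (nat \<Rightarrow> 's \<Rightarrow> complex mat) \<Rightarrow> ('g \<Rightarrow> 's word) \<Rightarrow> (nat \<Rightarrow> 'g \<Rightarrow> complex mat) \<Rightarrow> 'g \<Rightarrow> 'g \<Rightarrow> nat \<Rightarrow> complex mat" where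
  "alpha_seq G nrm R k \<phi> \<sigma> \<phi>t g h n =
     c_seq G nrm R k \<phi> \<phi>t g h n * mat_adjoint (phiU k \<phi> \<sigma> (g \<otimes>\<^bsub>G\<^esub> h) n)"

definition alpha_coboundary :: "nat filter \<Rightarrow> ('g, 'm) monoid_scheme \<Rightarrow> (complex mat \<Rightarrow> real) \<Rightarrow> 's word set
    \<Rightarrow> (nat \<Rightarrow> nat) \<Rightarrow> (nat \<Rightarrow> 's \<Rightarrow> complex mat) \<Rightarrow> ('g \<Rightarrow> 's word) \<Rightarrow> (nat \<Rightarrow> 'g \<Rightarrow> complex mat)
    \<Rightarrow> ('g \<Rightarrow> nat \<Rightarrow> complex mat) \<Rightarrow> bool" where
  "alpha_coboundary U G nrm R k \<phi> \<sigma> \<phi>t \<beta> \<longleftrightarrow>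
     (\<forall>g\<in>carrier G. MU_seq nrm k (\<beta> g)) \<and>
     (\<forall>g\<in>carrier G. \<forall>h\<in>carrier G.
        eqU U nrm (alpha_seq G nrm R k \<phi> \<sigma> \<phi>t g h)
          (\<lambda>n. phiU k \<phi> \<sigma> g n * \<beta> h n * mat_adjoint (phiU k \<phi> \<sigma> g n)
               - \<beta> (g \<otimes>\<^bsub>G\<^esub> h) n + \<beta> g n))"

end

theory Submission
  imports Defs "HOL-Computational_Algebra.Fundamental_Theorem_Algebra"
begin

lemma adj_def': "mat_adjoint (A :: complex mat) = mat (dim_col A) (dim_row A) (\<lambda>(i,j). cnj (A $$ (j,i)))"
  unfolding mat_adjoint_def by (rule eq_matI) (auto simp: mat_of_rows_def)

lemma adj_dim[simp]: "dim_row (mat_adjoint (A::complex mat)) = dim_col A" "dim_col (mat_adjoint A) = dim_row A"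
  by (auto simp: adj_def')

lemma adj_index[simp]: "i < dim_col A \<Longrightarrow> j < dim_row A \<Longrightarrow> mat_adjoint (A::complex mat) $$ (i,j) = cnj (A $$ (j,i))"
  by (auto simp: adj_def')

lemma adj_carrier[simp]: "(A::complex mat) \<in> carrier_mat m n \<Longrightarrow> mat_adjoint A \<in> carrier_mat n m"
  by auto

lemma adj_adj[simp]: "mat_adjoint (mat_adjoint (A::complex mat)) = A"
  by (rule eq_matI) auto

lemma adj_mult: "(A::complex mat) \<in> carrier_mat m n \<Longrightarrow> B \<in> carrier_mat n p \<Longrightarrow>
   mat_adjoint (A * B) = mat_adjoint B * mat_adjoint A"
  by (rule eq_matI) (auto simp: scalar_prod_def row_def col_def mult.commute)

lemma adj_add: "(A::complex mat) \<in> carrier_mat m n \<Longrightarrow> B \<in> carrier_mat m n \<Longrightarrow>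
   mat_adjoint (A + B) = mat_adjoint A + mat_adjoint B"
  by (rule eq_matI) auto

lemma adj_minus: "(A::complex mat) \<in> carrier_mat m n \<Longrightarrow> B \<in> carrier_mat m n \<Longrightarrow>
   mat_adjoint (A - B) = mat_adjoint A - mat_adjoint B"
  by (rule eq_matI) auto

lemma adj_uminus: "mat_adjoint (- (A::complex mat)) = - mat_adjoint A"
  by (rule eq_matI) auto

lemma adj_smult: "mat_adjoint (a \<cdot>\<^sub>m (A::complex mat)) = cnj a \<cdot>\<^sub>m mat_adjoint A"
  by (rule eq_matI) auto

lemma adj_one[simp]: "mat_adjoint (1\<^sub>m n :: complex mat) = 1\<^sub>m n"
  by (rule eq_matI) auto

lemma adj_zero[simp]: "mat_adjoint (0\<^sub>m n m :: complex mat) = 0\<^sub>m m n"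
  by (rule eq_matI) auto

lemma sc_smult: "(x::complex vec) \<in> carrier_vec n \<Longrightarrow> y \<in> carrier_vec n \<Longrightarrow>
   (a \<cdot>\<^sub>v x) \<bullet>c (b \<cdot>\<^sub>v y) = a * cnj b * (x \<bullet>c y)"
  unfolding scalar_prod_def by (auto simp: sum_distrib_left intro!: sum.cong)

lemma sq_pos_complex: assumes "(w::complex vec) \<in> carrier_vec n" "w \<noteq> 0\<^sub>v n"
  shows "w \<bullet>c w = complex_of_real (Re (w \<bullet>c w))" "Re (w \<bullet>c w) > 0"
proof -
  have "w \<bullet>c w > 0" using assms conjugate_square_greater_0_vec by blast
  then show "w \<bullet>c w = complex_of_real (Re (w \<bullet>c w))" "Re (w \<bullet>c w) > 0"
    by (auto simp: less_complex_def complex_eq_iff)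
qed

lemma unitary_from_left: assumes "(P::complex mat) \<in> carrier_mat n n" "mat_adjoint P * P = 1\<^sub>m n"
  shows "unitary_mat n P"
  using assms mat_mult_left_right_inverse[of "mat_adjoint P" n P] unfolding unitary_mat_def by auto

lemma unit_completion: assumes v: "(v::complex vec) \<in> carrier_vec n" and v1: "v \<bullet>c v = 1"
  shows "\<exists>V. unitary_mat n V \<and> col V 0 = v"
proof -
  have v0: "v \<noteq> 0\<^sub>v n" using v1 v by auto
  interpret cof_vec_space n "TYPE(complex)" .
  define b where "b = basis_completion v"
  define ws where "ws = gram_schmidt n b"
  from basis_completion[OF v v0, folded b_def]
  have dist_b: "distinct b" 
    and indep: "\<not> lin_dep (set b)" and b: "set b \<subseteq> carrier_vec n" and hdb: "hd b = v" 
    and len_b: "length b = n" by auto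
  have n: "n > 0" using v0 v by (cases n) auto
  from hdb len_b n obtain vs where bv: "b = v # vs" by (cases b, auto)
  from gram_schmidt_result[OF b dist_b indep refl, folded ws_def]
  have ws: "set ws \<subseteq> carrier_vec n" "corthogonal ws" "length ws = n" 
    by (auto simp: len_b)
  from gram_schmidt_hd[OF v, of vs, folded bv] have hdws: "hd ws = v" unfolding ws_def .
  define nrmz where "nrmz = (\<lambda>w::complex vec. (1 / complex_of_real (sqrt (Re (w \<bullet>c w)))) \<cdot>\<^sub>v w)"
  define nws where "nws = map nrmz ws"
  define V where "V = mat_of_cols n nws"
  have len: "length nws = n" using ws by (simp add: nws_def)
  have wsi: "i < n \<Longrightarrow> ws ! i \<in> carrier_vec n" for i using ws nth_mem by auto
  have nwsi: "i < n \<Longrightarrow> nws ! i \<in> carrier_vec n" for i using wsi ws by (auto simp: nws_def nrmz_def)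
  have ws0: "i < n \<Longrightarrow> ws ! i \<noteq> 0\<^sub>v n" for i
  proof
    assume "i < n" "ws ! i = 0\<^sub>v n"
    then have "ws ! i \<bullet>c ws ! i = 0" by simp
    with corthogonalD[OF ws(2), of i i] \<open>i < n\<close> ws show False by auto
  qed
  have orth: "nws ! i \<bullet>c nws ! j = (if i = j then 1 else 0)" if ij: "i < n" "j < n" for i j
  proof -
    have e: "nws ! i \<bullet>c nws ! j = (1 / complex_of_real (sqrt (Re (ws!i \<bullet>c ws!i)))) *
       cnj (1 / complex_of_real (sqrt (Re (ws!j \<bullet>c ws!j)))) * (ws!i \<bullet>c ws!j)"
      unfolding nws_def nrmz_def using ij ws by (simp add: sc_smult[OF wsi wsi])
    show ?thesis
    proof (cases "i = j")
      case True
      have p: "Re (ws!i \<bullet>c ws!i) > 0" and q: "ws!i \<bullet>c ws!i = complex_of_real (Re (ws!i \<bullet>c ws!i))"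
        using sq_pos_complex[OF wsi ws0] ij by auto
      define R where "R = Re (ws!i \<bullet>c ws!i)"
      have s: "complex_of_real (sqrt R) * complex_of_real (sqrt R) = complex_of_real R"
        using p unfolding R_def[symmetric] by (simp flip: of_real_mult)
      have s0: "complex_of_real (sqrt R) \<noteq> 0" using p unfolding R_def[symmetric] by simp
      have "nws ! i \<bullet>c nws ! j = (1 / complex_of_real (sqrt R)) * cnj (1 / complex_of_real (sqrt R)) * complex_of_real R"
        using e True q unfolding R_def by simp
      also have "(1 / complex_of_real (sqrt R)) * cnj (1 / complex_of_real (sqrt R)) * complex_of_real R = 1"
        using s0 s by (simp add: field_simps)
      finally show ?thesis using True by simp
    next
      case False
      then show ?thesis unfolding e using corthogonalD[OF ws(2), of i j] ij ws by auto
    qed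
  qed
  have Vc: "V \<in> carrier_mat n n" unfolding V_def using len by auto
  have "mat_adjoint V * V = 1\<^sub>m n"
  proof (rule eq_matI)
    fix i j assume "i < dim_row (1\<^sub>m n)" "j < dim_col (1\<^sub>m n)"
    then have ij: "i < n" "j < n" by auto
    have "(mat_adjoint V * V) $$ (i,j) = nws ! j \<bullet>c nws ! i"
      using ij Vc len nwsi[OF ij(1)] nwsi[OF ij(2)]
      by (auto simp: scalar_prod_def V_def mat_of_cols_index mult.commute intro!: sum.cong)
    then show "(mat_adjoint V * V) $$ (i,j) = 1\<^sub>m n $$ (i,j)" using orth[OF ij(2,1)] ij by auto
  qed (use Vc in auto)
  then have "unitary_mat n V" using unitary_from_left Vc by blast
  moreover have "col V 0 = v"
  proof -
    have "ws ! 0 = v" using hdws n ws by (cases ws) auto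
    then have "nws ! 0 = v" using n ws v1 by (simp add: nws_def nrmz_def)
    then show ?thesis unfolding V_def using col_mat_of_cols[of 0 nws n] n len nwsi by auto
  qed
  ultimately show ?thesis by blast
qed

lemma adj_vec: assumes A: "(A::complex mat) \<in> carrier_mat m n" and x: "x \<in> carrier_vec n" and y: "y \<in> carrier_vec m"
  shows "(A *\<^sub>v x) \<bullet>c y = x \<bullet>c (mat_adjoint A *\<^sub>v y)"
proof -
  have "(A *\<^sub>v x) \<bullet>c y = (\<Sum>i<m. (\<Sum>j<n. A $$ (i,j) * x $ j) * cnj (y $ i))"
    using A x y by (auto simp: scalar_prod_def row_def atLeast0LessThan intro!: sum.cong)
  also have "\<dots> = (\<Sum>i<m. \<Sum>j<n. A $$ (i,j) * x $ j * cnj (y $ i))"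
    by (simp add: sum_distrib_right)
  also have "\<dots> = (\<Sum>j<n. \<Sum>i<m. A $$ (i,j) * x $ j * cnj (y $ i))"
    by (rule sum.swap)
  also have "\<dots> = (\<Sum>j<n. x $ j * cnj (\<Sum>i<m. cnj (A $$ (i,j)) * y $ i))"
    by (auto simp: sum_distrib_left cnj_sum intro!: sum.cong)
  also have "\<dots> = x \<bullet>c (mat_adjoint A *\<^sub>v y)"
    using A x y by (auto simp: scalar_prod_def row_def atLeast0LessThan intro!: sum.cong)
  finally show ?thesis .
qed

lemma eigen_exists: assumes B: "(B::complex mat) \<in> carrier_mat n n" and n: "n > 0"
  shows "\<exists>w e. w \<in> carrier_vec n \<and> w \<noteq> 0\<^sub>v n \<and> B *\<^sub>v w = e \<cdot>\<^sub>v w"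
proof -
  have "degree (char_poly B) = n" using degree_monic_char_poly[OF B] by simp
  then have "\<not> constant (poly (char_poly B))" using n by (simp add: constant_degree)
  then obtain e where "poly (char_poly B) e = 0" using fundamental_theorem_of_algebra by blast
  then have "eigenvalue B e" using eigenvalue_root_char_poly[OF B] by simp
  then show ?thesis using B unfolding eigenvalue_def eigenvector_def by auto
qed

lemma det_adj: assumes A: "(A::complex mat) \<in> carrier_mat n n"
  shows "det (mat_adjoint A) = cnj (det A)"
proof -
  have "mat_adjoint A = transpose_mat (map_mat cnj A)" by (rule eq_matI) auto
  then have "det (mat_adjoint A) = det (map_mat cnj A)" using det_transpose[of "map_mat cnj A" n] A by simp
  also have "\<dots> = cnj (det A)" using A
    by (auto simp: det_def' cnj_sum cnj_prod intro!: sum.cong prod.cong)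
  finally show ?thesis .
qed

lemma kernel_adj: assumes A: "(A::complex mat) \<in> carrier_mat n n" and w: "w \<in> carrier_vec n" "w \<noteq> 0\<^sub>v n"
  and Aw: "A *\<^sub>v w = 0\<^sub>v n"
  shows "\<exists>u. u \<in> carrier_vec n \<and> u \<noteq> 0\<^sub>v n \<and> mat_adjoint A *\<^sub>v u = 0\<^sub>v n"
proof -
  have "eigenvector A w 0" using A w Aw unfolding eigenvector_def by auto
  then have "eigenvalue A 0" unfolding eigenvalue_def by auto
  then have "det (char_matrix A 0) = 0" using eigenvalue_det[OF A] by simp
  moreover have "char_matrix A 0 = A" using A unfolding char_matrix_def by auto
  ultimately have "det A = 0" by simp
  moreover have "char_matrix (mat_adjoint A) 0 = mat_adjoint A" using A unfolding char_matrix_def by (intro eq_matI) auto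
  ultimately have "det (char_matrix (mat_adjoint A) 0) = 0" using det_adj[OF A] by simp
  then have "eigenvalue (mat_adjoint A) 0" using eigenvalue_det[of "mat_adjoint A" n] A by auto
  then obtain u where u: "u \<in> carrier_vec n" "u \<noteq> 0\<^sub>v n" "mat_adjoint A *\<^sub>v u = 0 \<cdot>\<^sub>v u"
    using A unfolding eigenvalue_def eigenvector_def by auto
  moreover have "0 \<cdot>\<^sub>v u = 0\<^sub>v n" using u(1) by (intro eq_vecI) auto
  ultimately show ?thesis by auto
qed

lemma sc_smult_l: "(x::complex vec) \<in> carrier_vec n \<Longrightarrow> y \<in> carrier_vec n \<Longrightarrow>
   (a \<cdot>\<^sub>v x) \<bullet>c y = a * (x \<bullet>c y)"
  unfolding scalar_prod_def by (auto simp: sum_distrib_left intro!: sum.cong)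

lemma sc_smult_r: "(x::complex vec) \<in> carrier_vec n \<Longrightarrow> y \<in> carrier_vec n \<Longrightarrow>
   x \<bullet>c (b \<cdot>\<^sub>v y) = cnj b * (x \<bullet>c y)"
  unfolding scalar_prod_def by (auto simp: sum_distrib_left intro!: sum.cong)

lemma normalize_vec: assumes x: "(x::complex vec) \<in> carrier_vec n" "x \<noteq> 0\<^sub>v n"
  shows "\<exists>c. (c \<cdot>\<^sub>v x) \<bullet>c (c \<cdot>\<^sub>v x) = 1"
proof -
  define N where "N = Re (x \<bullet>c x)"
  have N: "N > 0" "x \<bullet>c x = complex_of_real N" using sq_pos_complex[OF x] unfolding N_def by auto
  define c where "c = complex_of_real (1 / sqrt N)"
  have "(c \<cdot>\<^sub>v x) \<bullet>c (c \<cdot>\<^sub>v x) = c * cnj c * complex_of_real N" using sc_smult[OF x(1) x(1)] N by simp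
  also have "\<dots> = complex_of_real (1 / sqrt N * (1 / sqrt N) * N)"
    by (simp only: c_def complex_cnj_complex_of_real of_real_mult)
  also have "1 / sqrt N * (1 / sqrt N) * N = 1" using N(1) by (auto simp: field_simps)
  
  finally show ?thesis by auto
qed

lemma sing_pair: assumes A: "(A::complex mat) \<in> carrier_mat n n" and n: "n > 0"
  shows "\<exists>u v s. u \<in> carrier_vec n \<and> v \<in> carrier_vec n \<and> u \<bullet>c u = 1 \<and> v \<bullet>c v = 1 \<and>
     A *\<^sub>v v = complex_of_real s \<cdot>\<^sub>v u \<and> mat_adjoint A *\<^sub>v u = complex_of_real s \<cdot>\<^sub>v v"
proof -
  have AA: "mat_adjoint A * A \<in> carrier_mat n n" using A by auto
  obtain w e where w: "w \<in> carrier_vec n" "w \<noteq> 0\<^sub>v n" and we: "(mat_adjoint A * A) *\<^sub>v w = e \<cdot>\<^sub>v w"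
    using eigen_exists[OF AA n] by blast
  show ?thesis
  proof (cases "A *\<^sub>v w = 0\<^sub>v n")
    case True
    obtain u' where u': "u' \<in> carrier_vec n" "u' \<noteq> 0\<^sub>v n" "mat_adjoint A *\<^sub>v u' = 0\<^sub>v n"
      using kernel_adj[OF A w True] by blast
    obtain c where c: "(c \<cdot>\<^sub>v u') \<bullet>c (c \<cdot>\<^sub>v u') = 1" using normalize_vec[OF u'(1,2)] by blast
    obtain d where d: "(d \<cdot>\<^sub>v w) \<bullet>c (d \<cdot>\<^sub>v w) = 1" using normalize_vec[OF w] by blast
    have "A *\<^sub>v (d \<cdot>\<^sub>v w) = complex_of_real 0 \<cdot>\<^sub>v (c \<cdot>\<^sub>v u')"
      using mult_mat_vec[OF A w(1)] True u'(1) by (intro eq_vecI) auto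
    moreover have "mat_adjoint A *\<^sub>v (c \<cdot>\<^sub>v u') = complex_of_real 0 \<cdot>\<^sub>v (d \<cdot>\<^sub>v w)"
      using mult_mat_vec[OF adj_carrier[OF A] u'(1)] u'(3) w(1) by (intro eq_vecI) auto
    ultimately show ?thesis using c d u'(1) w(1) by (intro exI[of _ "c \<cdot>\<^sub>v u'"] exI[of _ "d \<cdot>\<^sub>v w"] exI[of _ 0]) auto
  next
    case False
    have Aw: "A *\<^sub>v w \<in> carrier_vec n" using A w by auto
    define N where "N = Re (w \<bullet>c w)"
    have N: "N > 0" "w \<bullet>c w = complex_of_real N" using sq_pos_complex[OF w] unfolding N_def by auto
    define Q where "Q = Re ((A *\<^sub>v w) \<bullet>c (A *\<^sub>v w))"
    have Q: "Q > 0" "(A *\<^sub>v w) \<bullet>c (A *\<^sub>v w) = complex_of_real Q" using sq_pos_complex[OF Aw False] unfolding Q_def by auto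
    have "complex_of_real Q = w \<bullet>c (mat_adjoint A *\<^sub>v (A *\<^sub>v w))"
      using adj_vec[OF A w(1) Aw] Q by simp
    also have "\<dots> = w \<bullet>c (e \<cdot>\<^sub>v w)" using we assoc_mult_mat_vec[OF adj_carrier[OF A] A w(1)] by simp
    also have "\<dots> = cnj e * complex_of_real N" using sc_smult_r[OF w(1) w(1)] N by simp
    finally have "cnj e = complex_of_real (Q / N)" using N(1) by (simp add: field_simps)
    then have e: "e = complex_of_real (Q / N)" by (metis complex_cnj_cnj complex_cnj_complex_of_real)
    define t where "t = 1 / sqrt N"
    define s where "s = sqrt (Q / N)"
    have t: "t > 0" "t * t * N = 1" using N(1) unfolding t_def by (auto simp: field_simps)
    have s: "s > 0" "s * s = Q / N" using N(1) Q(1) unfolding s_def by auto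
    define v where "v = complex_of_real t \<cdot>\<^sub>v w"
    define u where "u = complex_of_real (t / s) \<cdot>\<^sub>v (A *\<^sub>v w)"
    have vc: "v \<in> carrier_vec n" and uc: "u \<in> carrier_vec n" using w Aw unfolding u_def v_def by auto
    have "v \<bullet>c v = complex_of_real t * cnj (complex_of_real t) * (w \<bullet>c w)"
      unfolding v_def by (rule sc_smult[OF w(1) w(1)])
    also have "\<dots> = complex_of_real (t * t * N)" unfolding N(2) by (simp only: complex_cnj_complex_of_real of_real_mult)
    finally have v1: "v \<bullet>c v = 1" using t by simp
    have "u \<bullet>c u = complex_of_real (t / s) * cnj (complex_of_real (t / s)) * ((A *\<^sub>v w) \<bullet>c (A *\<^sub>v w))"
      unfolding u_def by (rule sc_smult[OF Aw Aw])
    also have "\<dots> = complex_of_real ((t / s) * (t / s) * Q)" unfolding Q(2) by (simp only: complex_cnj_complex_of_real of_real_mult)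
    also have "(t / s) * (t / s) * Q = (t * t * N) * (Q / N) / (s * s)" using N(1) s(1) by (simp add: field_simps)
    also have "\<dots> = 1" using t s Q N(1) by simp
    finally have u1: "u \<bullet>c u = 1" by simp
    have "s * (t / s) = t" using s(1) by simp
    then have st: "complex_of_real s * complex_of_real (t / s) = complex_of_real t"
      by (subst of_real_mult[symmetric]) simp
    have 1: "A *\<^sub>v v = complex_of_real s \<cdot>\<^sub>v u"
      unfolding v_def u_def smult_smult_assoc st using mult_mat_vec[OF A w(1)] .
    have "mat_adjoint A *\<^sub>v u = complex_of_real (t / s) \<cdot>\<^sub>v (mat_adjoint A *\<^sub>v (A *\<^sub>v w))"
      unfolding u_def using mult_mat_vec[OF adj_carrier[OF A] Aw] .
    also have "\<dots> = complex_of_real (t / s) \<cdot>\<^sub>v (e \<cdot>\<^sub>v w)" using we assoc_mult_mat_vec[OF adj_carrier[OF A] A w(1)] by simp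
    also have "\<dots> = complex_of_real (t / s * (Q / N)) \<cdot>\<^sub>v w" unfolding smult_smult_assoc e by (simp flip: of_real_mult)
    also have "t / s * (Q / N) = s * t"
    proof -
      have "t / s * (Q / N) = t / s * (s * s)" using s(2) by simp
      also have "\<dots> = s * t" using s(1) by simp
      finally show ?thesis .
    qed
    also have "complex_of_real (s * t) \<cdot>\<^sub>v w = complex_of_real s \<cdot>\<^sub>v v" unfolding v_def smult_smult_assoc by simp
    finally have 2: "mat_adjoint A *\<^sub>v u = complex_of_real s \<cdot>\<^sub>v v" .
    show ?thesis using 1 2 u1 v1 uc vc by blast
  qed
qed

lemma unitary_carrier: "unitary_mat n P \<Longrightarrow> P \<in> carrier_mat n n" unfolding unitary_mat_def by auto

lemma unitary_one: "unitary_mat n (1\<^sub>m n)" unfolding unitary_mat_def by auto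

lemma unitary_adj: "unitary_mat n P \<Longrightarrow> unitary_mat n (mat_adjoint P)"
  unfolding unitary_mat_def by auto

lemma unitary_mult: assumes "unitary_mat n P" "unitary_mat n Q" shows "unitary_mat n (P * Q)"
proof -
  have P: "P \<in> carrier_mat n n" "P * mat_adjoint P = 1\<^sub>m n" "mat_adjoint P * P = 1\<^sub>m n"
   and Q: "Q \<in> carrier_mat n n" "Q * mat_adjoint Q = 1\<^sub>m n" "mat_adjoint Q * Q = 1\<^sub>m n"
    using assms unfolding unitary_mat_def by auto
  have a: "mat_adjoint (P * Q) = mat_adjoint Q * mat_adjoint P" using adj_mult P Q by blast
  have "mat_adjoint P * (P * Q) = Q"
    by (subst assoc_mult_mat[symmetric, of _ n n _ n _ n]) (use P Q in auto)
  moreover have "mat_adjoint Q * mat_adjoint P * (P * Q) = mat_adjoint Q * (mat_adjoint P * (P * Q))"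
    by (rule assoc_mult_mat[of _ n n _ n _ n]) (use P Q in auto)
  ultimately have "mat_adjoint Q * mat_adjoint P * (P * Q) = 1\<^sub>m n" using Q by simp
  then show ?thesis using unitary_from_left[of "P*Q" n] P Q a by (metis mult_carrier_mat)
qed

lemma adj_blk: assumes A: "(A::complex mat) \<in> carrier_mat a a" and D: "D \<in> carrier_mat b b"
  shows "mat_adjoint (four_block_mat A (0\<^sub>m a b) (0\<^sub>m b a) D) =
    four_block_mat (mat_adjoint A) (0\<^sub>m a b) (0\<^sub>m b a) (mat_adjoint D)"
  using A D by (intro eq_matI) auto

lemma unitary_blk: assumes "unitary_mat m P"
  shows "unitary_mat (Suc m) (four_block_mat (1\<^sub>m 1) (0\<^sub>m 1 m) (0\<^sub>m m 1) P)"
proof -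
  have P: "P \<in> carrier_mat m m" "mat_adjoint P * P = 1\<^sub>m m" using assms unfolding unitary_mat_def by auto
  have c: "four_block_mat (1\<^sub>m 1) (0\<^sub>m 1 m) (0\<^sub>m m 1) P \<in> carrier_mat (Suc m) (Suc m)"
  proof -
    have "four_block_mat (1\<^sub>m 1) (0\<^sub>m 1 m) (0\<^sub>m m 1) P \<in> carrier_mat (1 + m) (1 + m)"
      by (rule four_block_carrier_mat) (use P in auto)
    then show ?thesis by simp
  qed
  have "mat_adjoint (four_block_mat (1\<^sub>m 1) (0\<^sub>m 1 m) (0\<^sub>m m 1) P) * four_block_mat (1\<^sub>m 1) (0\<^sub>m 1 m) (0\<^sub>m m 1) P
     = four_block_mat (1\<^sub>m 1) (0\<^sub>m 1 m) (0\<^sub>m m 1) (mat_adjoint P) * four_block_mat (1\<^sub>m 1) (0\<^sub>m 1 m) (0\<^sub>m m 1) P"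
    using adj_blk[where A="1\<^sub>m 1" and D=P and a=1 and b=m] P by simp
  also have "\<dots> = four_block_mat (1\<^sub>m 1) (0\<^sub>m 1 m) (0\<^sub>m m 1) (mat_adjoint P * P)"
    by (subst mult_four_block_mat) (use P in auto)
  also have "\<dots> = 1\<^sub>m (Suc m)" using P by simp
  finally show ?thesis using unitary_from_left c by blast
qed

lemma unitary_cancels:
  assumes U: "unitary_mat n U" and B: "B \<in> carrier_mat n k"
  shows "U * (mat_adjoint U * B) = B" "mat_adjoint U * (U * B) = B"
    "U * mat_adjoint U = 1\<^sub>m n" "mat_adjoint U * U = 1\<^sub>m n"
proof -
  have Uc: "U \<in> carrier_mat n n" "U * mat_adjoint U = 1\<^sub>m n" "mat_adjoint U * U = 1\<^sub>m n"
    using U unfolding unitary_mat_def by auto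
  show "U * mat_adjoint U = 1\<^sub>m n" "mat_adjoint U * U = 1\<^sub>m n" using Uc by auto
  have "U * (mat_adjoint U * B) = (U * mat_adjoint U) * B"
    by (rule assoc_mult_mat[symmetric, of _ n n _ n _ k]) (use Uc B in auto)
  then show "U * (mat_adjoint U * B) = B" using Uc B by simp
  have "mat_adjoint U * (U * B) = (mat_adjoint U * U) * B"
    by (rule assoc_mult_mat[symmetric, of _ n n _ n _ k]) (use Uc B in auto)
  then show "mat_adjoint U * (U * B) = B" using Uc B by simp
qed

lemma adj_equiv: "(A::complex mat) \<in> carrier_mat n n \<Longrightarrow>
  \<exists>P Q. unitary_mat n P \<and> unitary_mat n Q \<and> P * A * Q = mat_adjoint A"
proof (induction n arbitrary: A)
  case 0
  have "mat_adjoint A = A" using 0 by (intro eq_matI) auto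
  then show ?case using unitary_one[of 0] 0 by (intro exI[of _ "1\<^sub>m 0"]) auto
next
  case (Suc m)
  let ?n = "Suc m"
  have A: "A \<in> carrier_mat ?n ?n" by fact
  obtain u v s where uv: "u \<in> carrier_vec ?n" "v \<in> carrier_vec ?n" "u \<bullet>c u = 1" "v \<bullet>c v = 1"
    and Av: "A *\<^sub>v v = complex_of_real s \<cdot>\<^sub>v u" and Au: "mat_adjoint A *\<^sub>v u = complex_of_real s \<cdot>\<^sub>v v"
    using sing_pair[OF A] by blast
  obtain U where U: "unitary_mat ?n U" "col U 0 = u" using unit_completion[OF uv(1,3)] by blast
  obtain V where V: "unitary_mat ?n V" "col V 0 = v" using unit_completion[OF uv(2,4)] by blast
  have Uc: "U \<in> carrier_mat ?n ?n" and Vc: "V \<in> carrier_mat ?n ?n" using U V unitary_carrier by auto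
  have Uac: "mat_adjoint U \<in> carrier_mat ?n ?n" and Vac: "mat_adjoint V \<in> carrier_mat ?n ?n"
    and Aac: "mat_adjoint A \<in> carrier_mat ?n ?n" using Uc Vc A by auto
  define X where "X = mat_adjoint U * A * V"
  have Xc: "X \<in> carrier_mat ?n ?n" unfolding X_def using Uac A Vc by auto
  have Uu: "mat_adjoint U *\<^sub>v u = unit_vec ?n 0"
  proof -
    have "mat_adjoint U *\<^sub>v u = col (mat_adjoint U * U) 0" using col_mult2[OF Uac Uc, of 0] U(2) by simp
    also have "\<dots> = unit_vec ?n 0" using unitary_cancels(4)[OF U(1) Uc] by simp
    finally show ?thesis .
  qed
  have Vv: "mat_adjoint V *\<^sub>v v = unit_vec ?n 0"
  proof -
    have "mat_adjoint V *\<^sub>v v = col (mat_adjoint V * V) 0" using col_mult2[OF Vac Vc, of 0] V(2) by simp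
    also have "\<dots> = unit_vec ?n 0" using unitary_cancels(4)[OF V(1) Vc] by simp
    finally show ?thesis .
  qed
  have colX: "col X 0 = complex_of_real s \<cdot>\<^sub>v unit_vec ?n 0"
  proof -
    have "col X 0 = (mat_adjoint U * A) *\<^sub>v v" unfolding X_def using col_mult2[of "mat_adjoint U * A" ?n ?n V ?n 0] Uac A Vc V(2) by auto
    also have "\<dots> = mat_adjoint U *\<^sub>v (complex_of_real s \<cdot>\<^sub>v u)" using Uac A uv(2) Av by simp
    also have "\<dots> = complex_of_real s \<cdot>\<^sub>v unit_vec ?n 0" using mult_mat_vec[OF Uac uv(1)] Uu by simp
    finally show ?thesis .
  qed
  have Xadj: "mat_adjoint X = mat_adjoint V * mat_adjoint A * U"
  proof -
    have "mat_adjoint X = mat_adjoint V * mat_adjoint (mat_adjoint U * A)"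
      unfolding X_def by (rule adj_mult[of _ ?n ?n]) (use Uac A Vc in auto)
    also have "mat_adjoint (mat_adjoint U * A) = mat_adjoint A * U"
      using adj_mult[OF Uac A] by simp
    finally show ?thesis using Vac Aac Uc by simp
  qed
  have colXa: "col (mat_adjoint X) 0 = complex_of_real s \<cdot>\<^sub>v unit_vec ?n 0"
  proof -
    have "col (mat_adjoint X) 0 = (mat_adjoint V * mat_adjoint A) *\<^sub>v u" unfolding Xadj
      using col_mult2[of "mat_adjoint V * mat_adjoint A" ?n ?n U ?n 0] Vac Aac Uc U(2) by auto
    also have "\<dots> = mat_adjoint V *\<^sub>v (complex_of_real s \<cdot>\<^sub>v v)" using Vac Aac uv(1) Au by simp
    also have "\<dots> = complex_of_real s \<cdot>\<^sub>v unit_vec ?n 0" using mult_mat_vec[OF Vac uv(2)] Vv by simp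
    finally show ?thesis .
  qed
  have X0: "X $$ (i,0) = (if i = 0 then complex_of_real s else 0)" if "i < ?n" for i
    using arg_cong[OF colX, of "\<lambda>w. w $ i"] that Xc by auto
  have X0': "X $$ (0,j) = (if j = 0 then complex_of_real s else 0)" if "j < ?n" for j
  proof -
    have "cnj (X $$ (0,j)) = (if j = 0 then complex_of_real s else 0)"
      using arg_cong[OF colXa, of "\<lambda>w. w $ j"] that Xc by auto
    then show ?thesis by (metis complex_cnj_cnj complex_cnj_complex_of_real complex_cnj_zero)
  qed
  define S where "S = mat 1 1 (\<lambda>_. complex_of_real s)"
  define X3 where "X3 = mat m m (\<lambda>(i,j). X $$ (Suc i, Suc j))"
  have X3c: "X3 \<in> carrier_mat m m" and Sc: "S \<in> carrier_mat 1 1" unfolding X3_def S_def by auto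
  have blk: "X = four_block_mat S (0\<^sub>m 1 m) (0\<^sub>m m 1) X3"
  proof (rule eq_matI)
    fix i j assume ij: "i < dim_row (four_block_mat S (0\<^sub>m 1 m) (0\<^sub>m m 1) X3)"
      "j < dim_col (four_block_mat S (0\<^sub>m 1 m) (0\<^sub>m m 1) X3)"
    then have ij': "i < ?n" "j < ?n" using Sc X3c by auto
    show "X $$ (i,j) = four_block_mat S (0\<^sub>m 1 m) (0\<^sub>m m 1) X3 $$ (i,j)"
      using ij ij' X0[OF ij'(1)] X0'[OF ij'(2)] Sc X3c
      by (cases i; cases j) (auto simp: S_def X3_def)
  qed (use Xc Sc X3c in auto)
  obtain P' Q' where P': "unitary_mat m P'" and Q': "unitary_mat m Q'" and PQ': "P' * X3 * Q' = mat_adjoint X3"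
    using Suc.IH[OF X3c] by blast
  have P'c: "P' \<in> carrier_mat m m" and Q'c: "Q' \<in> carrier_mat m m" using P' Q' unitary_carrier by auto
  define P0 where "P0 = four_block_mat (1\<^sub>m 1) (0\<^sub>m 1 m) (0\<^sub>m m 1) P'"
  define Q0 where "Q0 = four_block_mat (1\<^sub>m 1) (0\<^sub>m 1 m) (0\<^sub>m m 1) Q'"
  have P0: "unitary_mat ?n P0" and Q0: "unitary_mat ?n Q0" unfolding P0_def Q0_def using unitary_blk P' Q' by auto
  have P0c: "P0 \<in> carrier_mat ?n ?n" and Q0c: "Q0 \<in> carrier_mat ?n ?n" using P0 Q0 unitary_carrier by auto
  have "P0 * X * Q0 = four_block_mat S (0\<^sub>m 1 m) (0\<^sub>m m 1) (P' * X3 * Q')"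
    unfolding P0_def blk Q0_def
    by (subst mult_four_block_mat, (use Sc X3c P'c in auto)[8],
        subst mult_four_block_mat, (use Sc X3c P'c Q'c in auto)[8]) (use Sc X3c P'c Q'c in simp)
  also have "\<dots> = mat_adjoint X" unfolding PQ' blk
    by (subst adj_blk[OF Sc X3c]) (auto simp: S_def intro!: cong_four_block_mat eq_matI)
  finally have key: "P0 * X * Q0 = mat_adjoint X" .
  define P where "P = V * P0 * mat_adjoint U"
  define Q where "Q = V * Q0 * mat_adjoint U"
  have "unitary_mat ?n P" unfolding P_def by (intro unitary_mult unitary_adj V P0 U)
  moreover have "unitary_mat ?n Q" unfolding Q_def by (intro unitary_mult unitary_adj V Q0 U)
  moreover have "P * A * Q = mat_adjoint A"
  proof -
    have "P * A * Q = V * ((P0 * X * Q0) * mat_adjoint U)"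
      unfolding P_def Q_def X_def using Vc P0c Uac A Q0c
      by (simp add: assoc_mult_mat[of _ "Suc m" "Suc m" _ "Suc m" _ "Suc m"]
           mult_carrier_mat[of _ "Suc m" "Suc m" _ "Suc m"] unitary_cancels[OF V(1)] unitary_cancels[OF U(1)])
    also have "\<dots> = V * (mat_adjoint V * (mat_adjoint A * (U * mat_adjoint U)))"
      unfolding key Xadj using Vac Aac Uc Uac
      by (simp add: assoc_mult_mat[of _ "Suc m" "Suc m" _ "Suc m" _ "Suc m"]
           mult_carrier_mat[of _ "Suc m" "Suc m" _ "Suc m"])
    also have "\<dots> = mat_adjoint A" using unitary_cancels(3)[OF U(1) Aac] unitary_cancels(1)[OF V(1) Aac] Aac
      by (simp add: right_mult_one_mat[OF Aac])
    finally show ?thesis .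
  qed
  ultimately show ?case by blast
qed

declare minus_carrier_mat[simp] uminus_carrier_mat[simp]

locale nrmloc =
  fixes nrm :: "complex mat \<Rightarrow> real"
  assumes N: "ui_submult_norm nrm"
begin

lemma n_basic: assumes "A \<in> carrier_mat k k" "B \<in> carrier_mat k k"
  shows "nrm A = 0 \<longleftrightarrow> A = 0\<^sub>m k k" "nrm (A + B) \<le> nrm A + nrm B" "nrm (a \<cdot>\<^sub>m A) = cmod a * nrm A"
    "nrm (A * B) \<le> nrm A * nrm B"
    "unitary_mat k P \<Longrightarrow> unitary_mat k Q \<Longrightarrow> nrm (P * A * Q) = nrm A"
  using N assms unfolding ui_submult_norm_def by blast+

lemma n_zero: "nrm (0\<^sub>m k k) = 0"
  using n_basic(1)[of "0\<^sub>m k k" k "0\<^sub>m k k"] by auto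

lemma n_uminus: assumes "A \<in> carrier_mat k k" shows "nrm (- A) = nrm A"
proof -
  have "- A = (-1) \<cdot>\<^sub>m A" using assms by (intro eq_matI) auto
  then show ?thesis using n_basic(3)[OF assms assms, of "-1"] by simp
qed

lemma n_nonneg: assumes "A \<in> carrier_mat k k" shows "0 \<le> nrm A"
proof -
  have "A + - A = 0\<^sub>m k k" using assms by (intro eq_matI) auto
  then have "0 \<le> nrm A + nrm (- A)" using n_basic(2)[OF assms uminus_carrier_mat[OF assms]] n_zero by simp
  then show ?thesis using n_uminus[OF assms] by simp
qed

lemma n_mult: "A \<in> carrier_mat k k \<Longrightarrow> B \<in> carrier_mat k k \<Longrightarrow> nrm (A * B) \<le> nrm A * nrm B"
  using n_basic(4) by blast

lemma n_add: "A \<in> carrier_mat k k \<Longrightarrow> B \<in> carrier_mat k k \<Longrightarrow> nrm (A + B) \<le> nrm A + nrm B"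
  using n_basic(2) by blast

lemma n_smult: "A \<in> carrier_mat k k \<Longrightarrow> nrm (a \<cdot>\<^sub>m A) = cmod a * nrm A"
  using n_basic(3) by blast

lemma n_eq0: "A \<in> carrier_mat k k \<Longrightarrow> nrm A = 0 \<Longrightarrow> A = 0\<^sub>m k k"
  using n_basic(1) by blast

lemma n_minus_sym: assumes "A \<in> carrier_mat k k" "B \<in> carrier_mat k k" shows "nrm (A - B) = nrm (B - A)"
proof -
  have "A - B = - (B - A)" using assms by (intro eq_matI) auto
  then show ?thesis using n_uminus[of "B - A" k] assms by simp
qed

lemma n_minus: assumes "A \<in> carrier_mat k k" "B \<in> carrier_mat k k" shows "nrm (A - B) \<le> nrm A + nrm B"
proof -
  have "A - B = A + - B" using assms by (intro eq_matI) auto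
  then show ?thesis using n_add[of A k "- B"] n_uminus[of B k] assms by simp
qed

lemma n_tri: assumes "A \<in> carrier_mat k k" "B \<in> carrier_mat k k" "C \<in> carrier_mat k k"
  shows "nrm (A - C) \<le> nrm (A - B) + nrm (B - C)"
proof -
  have "A - C = (A - B) + (B - C)" using assms by (intro eq_matI) auto
  then show ?thesis using n_add[of "A - B" k "B - C"] assms by simp
qed

lemma n_unit_l: assumes "unitary_mat k P" "A \<in> carrier_mat k k" shows "nrm (P * A) = nrm A"
proof -
  have "P * A * 1\<^sub>m k = P * A" using assms unitary_carrier by auto
  then show ?thesis using n_basic(5)[OF assms(2) assms(2) assms(1) unitary_one] by simp
qed

lemma n_unit_r: assumes "unitary_mat k P" "A \<in> carrier_mat k k" shows "nrm (A * P) = nrm A"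
proof -
  have "1\<^sub>m k * A * P = A * P" using assms unitary_carrier by auto
  then show ?thesis using n_basic(5)[OF assms(2) assms(2) unitary_one assms(1)] by simp
qed

lemma n_adj: assumes "A \<in> carrier_mat k k" shows "nrm (mat_adjoint A) = nrm A"
  using adj_equiv[OF assms] n_basic(5)[OF assms assms] by metis

end

lemma mw_simps[simp]: "mat_word k f [] = 1\<^sub>m k"
  "mat_word k f ((s,e) # w) = (if e then mat_adjoint (f s) else f s) * mat_word k f w"
  unfolding mat_word_def by auto

lemma words_simps[simp]: "[] \<in> words S" "(x # w \<in> words S) \<longleftrightarrow> fst x \<in> S \<and> w \<in> words S"
  "(a @ b \<in> words S) \<longleftrightarrow> a \<in> words S \<and> b \<in> words S"
  unfolding words_def by auto

lemma mw_unitary: assumes U: "\<And>s. s \<in> S \<Longrightarrow> unitary_mat k (f s)" and w: "w \<in> words S"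
  shows "unitary_mat k (mat_word k f w)"
  using w
proof (induction w)
  case Nil then show ?case by (simp add: unitary_one)
next
  case (Cons x w)
  obtain s e where x: "x = (s,e)" by (cases x)
  have "s \<in> S" "w \<in> words S" using Cons.prems x by auto
  then show ?case using Cons.IH U x by (auto intro!: unitary_mult unitary_adj)
qed

lemma mw_append: assumes U: "\<And>s. s \<in> S \<Longrightarrow> unitary_mat k (f s)" and a: "a \<in> words S" and b: "b \<in> words S"
  shows "mat_word k f (a @ b) = mat_word k f a * mat_word k f b"
  using a
proof (induction a)
  case Nil
  have "mat_word k f b \<in> carrier_mat k k" using mw_unitary[where S=S and k=k and f=f, OF U b] unitary_carrier by auto
  then show ?case by simp
next
  case (Cons x a)
  obtain s e where x: "x = (s,e)" by (cases x)
  have s: "s \<in> S" and a: "a \<in> words S" using Cons.prems x by auto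
  let ?L = "(if e then mat_adjoint (f s) else f s)"
  have L: "?L \<in> carrier_mat k k" using U[OF s] unitary_carrier by auto
  have "mat_word k f ((x # a) @ b) = ?L * (mat_word k f a * mat_word k f b)" using Cons.IH[OF a] x by simp
  also have "\<dots> = ?L * mat_word k f a * mat_word k f b"
    by (rule assoc_mult_mat[symmetric, of _ k k _ k _ k]) (use L mw_unitary[where S=S and k=k and f=f, OF U a] mw_unitary[where S=S and k=k and f=f, OF U b] unitary_carrier in auto)
  finally show ?case using x by simp
qed

lemma ew_simps: "eval_word G gen [] = \<one>\<^bsub>G\<^esub>"
  "eval_word G gen ((s,e) # w) = (if e then inv\<^bsub>G\<^esub> (gen s) else gen s) \<otimes>\<^bsub>G\<^esub> eval_word G gen w"
  unfolding eval_word_def by auto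

lemma ew_carrier: assumes G: "group G" and gen: "gen \<in> S \<rightarrow> carrier G" and w: "w \<in> words S"
  shows "eval_word G gen w \<in> carrier G"
  using w
proof (induction w)
  case Nil then show ?case using G by (simp add: ew_simps group.is_monoid monoid.one_closed)
next
  case (Cons x w)
  obtain s e where x: "x = (s,e)" by (cases x)
  have "s \<in> S" "w \<in> words S" using Cons.prems x by auto
  moreover have "gen s \<in> carrier G" using gen \<open>s \<in> S\<close> by auto
  ultimately show ?case using Cons.IH gen G x by (auto simp: ew_simps group.inv_closed intro!: monoid.m_closed group.is_monoid)
qed

lemma ew_append: assumes G: "group G" and gen: "gen \<in> S \<rightarrow> carrier G" and a: "a \<in> words S" and b: "b \<in> words S"
  shows "eval_word G gen (a @ b) = eval_word G gen a \<otimes>\<^bsub>G\<^esub> eval_word G gen b"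
  using a
proof (induction a)
  case Nil then show ?case using ew_carrier[OF G gen b] G by (simp add: ew_simps group.is_monoid monoid.l_one)
next
  case (Cons x a)
  obtain s e where x: "x = (s,e)" by (cases x)
  have s: "s \<in> S" and a: "a \<in> words S" using Cons.prems x by auto
  have "gen s \<in> carrier G" using gen s by auto
  then have L: "(if e then inv\<^bsub>G\<^esub> (gen s) else gen s) \<in> carrier G" using G by (auto simp: group.inv_closed)
  show ?case using Cons.IH[OF a] x ew_carrier[OF G gen a] ew_carrier[OF G gen b] L G
    by (simp add: ew_simps group.is_monoid monoid.m_assoc)
qed

lemma step_inv: assumes U: "\<And>s. s \<in> S \<Longrightarrow> unitary_mat k (f s)"
  and rel: "\<And>r. r \<in> R \<Longrightarrow> mat_word k f r = 1\<^sub>m k" and RS: "R \<subseteq> words S"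
  and st: "pres_step S R u v"
  shows "(u \<in> words S \<longleftrightarrow> v \<in> words S) \<and> (u \<in> words S \<longrightarrow> mat_word k f u = mat_word k f v)"
  using st unfolding pres_step_def
proof (elim disjE exE conjE)
  fix a b s e assume s: "s \<in> S" and u: "u = a @ [(s,e),(s,\<not>e)] @ b" and v: "v = a @ b"
  have "u \<in> words S \<longleftrightarrow> v \<in> words S" using u v s by auto
  moreover
  { assume "u \<in> words S"
    then have a: "a \<in> words S" and b: "b \<in> words S" using u by auto
    have mb: "mat_word k f b \<in> carrier_mat k k" using mw_unitary[where S=S and k=k and f=f, OF U b] unitary_carrier by auto
    have "mat_word k f ([(s,e),(s,\<not>e)] @ b) = mat_word k f b"
      using unitary_cancels(1,2)[OF U[OF s] mb] by auto
    then have "mat_word k f u = mat_word k f v"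
      unfolding u v using mw_append[where S=S and k=k and f=f, OF U a] b s by simp }
  ultimately show ?thesis by blast
next
  fix a b r assume r: "r \<in> R" and u: "u = a @ r @ b" and v: "v = a @ b"
  have rS: "r \<in> words S" using RS r by auto
  have "u \<in> words S \<longleftrightarrow> v \<in> words S" using u v rS by auto
  moreover
  { assume "u \<in> words S"
    then have a: "a \<in> words S" and b: "b \<in> words S" using u by auto
    have mb: "mat_word k f b \<in> carrier_mat k k" using mw_unitary[where S=S and k=k and f=f, OF U b] unitary_carrier by auto
    have "mat_word k f (r @ b) = mat_word k f b"
      using mw_append[where S=S and k=k and f=f, OF U rS b] rel[OF r] mb by simp
    then have "mat_word k f u = mat_word k f v"
      unfolding u v using mw_append[where S=S and k=k and f=f, OF U a] b rS by simp }
  ultimately show ?thesis by blast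
qed

lemma equiv_inv: assumes U: "\<And>s. s \<in> S \<Longrightarrow> unitary_mat k (f s)"
  and rel: "\<And>r. r \<in> R \<Longrightarrow> mat_word k f r = 1\<^sub>m k" and RS: "R \<subseteq> words S"
  and eq: "equivclp (pres_step S R) u v" and u: "u \<in> words S"
  shows "mat_word k f u = mat_word k f v"
proof -
  have "(symclp (pres_step S R))\<^sup>*\<^sup>* u v" using eq unfolding equivclp_def .
  then have "(u \<in> words S \<longleftrightarrow> v \<in> words S) \<and> (u \<in> words S \<longrightarrow> mat_word k f u = mat_word k f v)"
  proof (induction rule: rtranclp_induct)
    case base then show ?case by simp
  next
    case (step y z)
    from step.hyps(2) have "(y \<in> words S \<longleftrightarrow> z \<in> words S) \<and> (y \<in> words S \<longrightarrow> mat_word k f y = mat_word k f z)"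
      unfolding symclp_def using step_inv[OF U rel RS, of y z] step_inv[OF U rel RS, of z y] by auto
    then show ?case using step.IH by auto
  qed
  then show ?thesis using u by auto
qed

lemma minus_zero_eq: "(A::complex mat) \<in> carrier_mat m n \<Longrightarrow> B \<in> carrier_mat m n \<Longrightarrow> A - B = 0\<^sub>m m n \<Longrightarrow> A = B"
proof (rule eq_matI)
  fix i j assume A: "A \<in> carrier_mat m n" and B: "B \<in> carrier_mat m n" and e: "A - B = 0\<^sub>m m n"
    and ij: "i < dim_row B" "j < dim_col B"
  have "(A - B) $$ (i,j) = 0" using e ij B by simp
  then show "A $$ (i,j) = B $$ (i,j)" using A B ij by simp
qed auto

lemma tendsto0_bound: assumes "eventually (\<lambda>n. f n \<le> g n) F" "(g \<longlongrightarrow> 0) F" "\<And>n. 0 \<le> f n"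
  shows "((f::_ \<Rightarrow> real) \<longlongrightarrow> 0) F"
  by (rule tendsto_sandwich[of "\<lambda>_. 0" f F g]) (use assms in auto)

locale prop33 = nrmloc nrm for nrm :: "complex mat \<Rightarrow> real" +
  fixes U :: "nat filter"
    and G :: "('g, 'm) monoid_scheme" and S :: "'s set" and R :: "'s word set" and gen :: "'s \<Rightarrow> 'g"
    and k :: "nat \<Rightarrow> nat" and \<phi> :: "nat \<Rightarrow> 's \<Rightarrow> complex mat"
    and \<sigma> :: "'g \<Rightarrow> 's word" and \<phi>t :: "nat \<Rightarrow> 'g \<Rightarrow> complex mat"
    and \<beta> :: "'g \<Rightarrow> nat \<Rightarrow> complex mat"
  assumes pres: "is_presentation G S R gen" and finR: "finite R"
    and phi_unitary: "\<And>n s. s \<in> S \<Longrightarrow> unitary_mat (k n) (\<phi> n s)"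
    and def_lim: "((\<lambda>n. defect nrm R (k n) (\<phi> n)) \<longlongrightarrow> 0) U"
    and sigma: "\<And>g. g \<in> carrier G \<Longrightarrow> \<sigma> g \<in> words S \<and> eval_word G gen (\<sigma> g) = g"
    and phit_unitary: "\<And>n g. g \<in> carrier G \<Longrightarrow> unitary_mat (k n) (\<phi>t n g)"
    and phit_one: "\<And>n. \<phi>t n \<one>\<^bsub>G\<^esub> = 1\<^sub>m (k n)"
    and phit_inv: "\<And>n g. g \<in> carrier G \<Longrightarrow> \<phi>t n (inv\<^bsub>G\<^esub> g) = mat_adjoint (\<phi>t n g)"
    and phit_close: "\<And>g. g \<in> carrier G \<Longrightarrow> \<exists>C. eventually (\<lambda>n.
           nrm (mat_word (k n) (\<phi> n) (\<sigma> g) - \<phi>t n g) \<le> C * defect nrm R (k n) (\<phi> n)) U"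
    and beta: "alpha_coboundary U G nrm R k \<phi> \<sigma> \<phi>t \<beta>"
begin

abbreviation "d n \<equiv> defect nrm R (k n) (\<phi> n)"
abbreviation "Phi g n \<equiv> phiU k \<phi> \<sigma> g n"
abbreviation "cs g h n \<equiv> c_seq G nrm R k \<phi> \<phi>t g h n"
abbreviation "al g h n \<equiv> alpha_seq G nrm R k \<phi> \<sigma> \<phi>t g h n"
abbreviation "Rhs g h n \<equiv> Phi g n * \<beta> h n * mat_adjoint (Phi g n) - \<beta> (g \<otimes>\<^bsub>G\<^esub> h) n + \<beta> g n"

lemma grp: "group G" and genS: "gen \<in> S \<rightarrow> carrier G" and RS: "R \<subseteq> words S"
  using pres unfolding is_presentation_def by auto

lemma mcl: "g \<in> carrier G \<Longrightarrow> h \<in> carrier G \<Longrightarrow> g \<otimes>\<^bsub>G\<^esub> h \<in> carrier G"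
  using grp by (simp add: group.is_monoid monoid.m_closed)

lemma Phi_unit: "g \<in> carrier G \<Longrightarrow> unitary_mat (k n) (Phi g n)"
  unfolding phiU_def using mw_unitary[where S=S and k="k n" and f="\<phi> n"] phi_unitary sigma by blast

lemma Phi_car[simp]: "g \<in> carrier G \<Longrightarrow> Phi g n \<in> carrier_mat (k n) (k n)"
  using Phi_unit unitary_carrier by blast

lemma Phia_car[simp]: "g \<in> carrier G \<Longrightarrow> mat_adjoint (Phi g n) \<in> carrier_mat (k n) (k n)"
  using Phi_car by simp

lemma phit_car[simp]: "g \<in> carrier G \<Longrightarrow> \<phi>t n g \<in> carrier_mat (k n) (k n)"
  using phit_unitary unitary_carrier by blast

lemma beta_car[simp]: "g \<in> carrier G \<Longrightarrow> \<beta> g n \<in> carrier_mat (k n) (k n)"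
  using beta unfolding alpha_coboundary_def MU_seq_def by blast

lemma beta_bnd: "g \<in> carrier G \<Longrightarrow> \<exists>C. \<forall>n. nrm (\<beta> g n) \<le> C"
  using beta unfolding alpha_coboundary_def MU_seq_def by blast

lemma dims[simp]: "g \<in> carrier G \<Longrightarrow> dim_row (\<beta> g n) = k n" "g \<in> carrier G \<Longrightarrow> dim_col (\<beta> g n) = k n"
  "g \<in> carrier G \<Longrightarrow> dim_row (Phi g n) = k n" "g \<in> carrier G \<Longrightarrow> dim_col (Phi g n) = k n"
  "g \<in> carrier G \<Longrightarrow> dim_row (\<phi>t n g) = k n" "g \<in> carrier G \<Longrightarrow> dim_col (\<phi>t n g) = k n"
  using beta_car[of g n] Phi_car[of g n] phit_car[of g n] unfolding carrier_mat_def by auto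

lemma E_lim: "g \<in> carrier G \<Longrightarrow> h \<in> carrier G \<Longrightarrow> ((\<lambda>n. nrm (al g h n - Rhs g h n)) \<longlongrightarrow> 0) U"
  using beta unfolding alpha_coboundary_def eqU_def by blast

lemma d_nonneg: "0 \<le> d n"
  unfolding defect_def using finR by (intro Max_ge) auto

lemma cs_car[simp]: "g \<in> carrier G \<Longrightarrow> h \<in> carrier G \<Longrightarrow> cs g h n \<in> carrier_mat (k n) (k n)"
  unfolding c_seq_def using mcl by auto

lemma cs_pos: "d n > 0 \<Longrightarrow> cs g h n = (1 / complex_of_real (d n)) \<cdot>\<^sub>m (\<phi>t n g * \<phi>t n h - \<phi>t n (g \<otimes>\<^bsub>G\<^esub> h))"
  unfolding c_seq_def by simp

lemma cs_zero: "\<not> d n > 0 \<Longrightarrow> cs g h n = 0\<^sub>m (k n) (k n)"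
  unfolding c_seq_def by simp

lemma al_eq: "al g h n = cs g h n * mat_adjoint (Phi (g \<otimes>\<^bsub>G\<^esub> h) n)"
  unfolding alpha_seq_def by simp

lemma al_car[simp]: "g \<in> carrier G \<Longrightarrow> h \<in> carrier G \<Longrightarrow> al g h n \<in> carrier_mat (k n) (k n)"
  unfolding al_eq using mult_carrier_mat[OF cs_car Phia_car[OF mcl]] by blast

lemma nrm_al: "g \<in> carrier G \<Longrightarrow> h \<in> carrier G \<Longrightarrow> nrm (al g h n) = nrm (cs g h n)"
  unfolding al_eq using n_unit_r[OF unitary_adj[OF Phi_unit[OF mcl]]] by auto

lemma Rhs_car[simp]: "g \<in> carrier G \<Longrightarrow> h \<in> carrier G \<Longrightarrow> Rhs g h n \<in> carrier_mat (k n) (k n)"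
  using mcl by auto

lemma nrm_conj: assumes "g \<in> carrier G" "A \<in> carrier_mat (k n) (k n)"
  shows "nrm (Phi g n * A * mat_adjoint (Phi g n)) = nrm A"
  using n_unit_r[OF unitary_adj[OF Phi_unit[OF assms(1), of n]] mult_carrier_mat[OF Phi_car[OF assms(1)] assms(2)]]
    n_unit_l[OF Phi_unit[OF assms(1)] assms(2)] by simp

lemma c_bnd: assumes g: "g \<in> carrier G" and h: "h \<in> carrier G"
  shows "\<exists>B. eventually (\<lambda>n. nrm (cs g h n) \<le> B) U"
proof -
  obtain C1 where C1: "\<And>n. nrm (\<beta> h n) \<le> C1" using beta_bnd[OF h] by blast
  obtain C2 where C2: "\<And>n. nrm (\<beta> (g \<otimes>\<^bsub>G\<^esub> h) n) \<le> C2" using beta_bnd[OF mcl[OF g h]] by blast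
  obtain C3 where C3: "\<And>n. nrm (\<beta> g n) \<le> C3" using beta_bnd[OF g] by blast
  have ev: "eventually (\<lambda>n. nrm (al g h n - Rhs g h n) < 1) U"
    using order_tendstoD(2)[OF E_lim[OF g h], of 1] by simp
  have "eventually (\<lambda>n. nrm (cs g h n) \<le> 1 + C1 + C2 + C3) U"
  proof (rule eventually_mono[OF ev])
    fix n assume lt: "nrm (al g h n - Rhs g h n) < 1"
    have gh: "g \<otimes>\<^bsub>G\<^esub> h \<in> carrier G" using mcl g h by auto
    have "al g h n = (al g h n - Rhs g h n) + Rhs g h n"
      using g h gh carrier_matD[OF al_car[OF g h, of n]] by (intro eq_matI) auto
    then have "nrm (al g h n) \<le> nrm (al g h n - Rhs g h n) + nrm (Rhs g h n)"
      using n_add[of "al g h n - Rhs g h n" "k n" "Rhs g h n"] g h by simp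
    moreover have "nrm (Rhs g h n) \<le> nrm (Phi g n * \<beta> h n * mat_adjoint (Phi g n) - \<beta> (g \<otimes>\<^bsub>G\<^esub> h) n) + nrm (\<beta> g n)"
      by (rule n_add) (use g h gh in auto)
    moreover have "nrm (Phi g n * \<beta> h n * mat_adjoint (Phi g n) - \<beta> (g \<otimes>\<^bsub>G\<^esub> h) n) \<le>
        nrm (Phi g n * \<beta> h n * mat_adjoint (Phi g n)) + nrm (\<beta> (g \<otimes>\<^bsub>G\<^esub> h) n)"
      by (rule n_minus) (use g h gh in auto)
    moreover have "nrm (Phi g n * \<beta> h n * mat_adjoint (Phi g n)) = nrm (\<beta> h n)"
      using nrm_conj g h by auto
    ultimately show "nrm (cs g h n) \<le> 1 + C1 + C2 + C3" using lt C1[of n] C2[of n] C3[of n] nrm_al[OF g h, of n] by linarith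
  qed
  then show ?thesis by blast
qed

end

context prop33 begin

lemma close': "g \<in> carrier G \<Longrightarrow> \<exists>C. eventually (\<lambda>n. nrm (Phi g n - \<phi>t n g) \<le> C * d n) U"
  using phit_close unfolding phiU_def by blast

lemma defect0: assumes dn: "d n = 0" and g: "g \<in> carrier G" and h: "h \<in> carrier G"
  shows "Phi (g \<otimes>\<^bsub>G\<^esub> h) n = Phi g n * Phi h n"
proof -
  have U': "\<And>s. s \<in> S \<Longrightarrow> unitary_mat (k n) (\<phi> n s)" using phi_unitary by blast
  have rel: "mat_word (k n) (\<phi> n) r = 1\<^sub>m (k n)" if r: "r \<in> R" for r
  proof -
    have rS: "r \<in> words S" using RS r by auto
    have mc: "mat_word (k n) (\<phi> n) r \<in> carrier_mat (k n) (k n)"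
      using mw_unitary[where S=S and k="k n" and f="\<phi> n", OF U' rS] unitary_carrier by blast
    have "nrm (mat_word (k n) (\<phi> n) r - 1\<^sub>m (k n)) \<le> d n"
      unfolding defect_def using finR r by (intro Max_ge) auto
    moreover have "0 \<le> nrm (mat_word (k n) (\<phi> n) r - 1\<^sub>m (k n))"
      by (rule n_nonneg[OF minus_carrier_mat[OF one_carrier_mat]])
    ultimately have "nrm (mat_word (k n) (\<phi> n) r - 1\<^sub>m (k n)) = 0" using dn by simp
    then have "mat_word (k n) (\<phi> n) r - 1\<^sub>m (k n) = 0\<^sub>m (k n) (k n)"
      by (rule n_eq0[OF minus_carrier_mat[OF one_carrier_mat]])
    then show ?thesis using minus_zero_eq[OF mc one_carrier_mat] by blast
  qed
  have sg: "\<sigma> g \<in> words S" "eval_word G gen (\<sigma> g) = g" using sigma g by auto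
  have sh: "\<sigma> h \<in> words S" "eval_word G gen (\<sigma> h) = h" using sigma h by auto
  have gh: "g \<otimes>\<^bsub>G\<^esub> h \<in> carrier G" using mcl g h by auto
  have sgh: "\<sigma> (g \<otimes>\<^bsub>G\<^esub> h) \<in> words S" "eval_word G gen (\<sigma> (g \<otimes>\<^bsub>G\<^esub> h)) = g \<otimes>\<^bsub>G\<^esub> h" using sigma gh by auto
  have E: "eval_word G gen (\<sigma> g @ \<sigma> h) = g \<otimes>\<^bsub>G\<^esub> h" using ew_append[OF grp genS sg(1) sh(1)] sg sh by simp
  have P: "\<forall>w\<in>words S. \<forall>w'\<in>words S.
        eval_word G gen w = eval_word G gen w' \<longleftrightarrow> equivclp (pres_step S R) w w'"
    using pres unfolding is_presentation_def by blast
  have w: "\<sigma> g @ \<sigma> h \<in> words S" using sg sh by simp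
  have "equivclp (pres_step S R) (\<sigma> g @ \<sigma> h) (\<sigma> (g \<otimes>\<^bsub>G\<^esub> h))"
    using P[rule_format, OF w sgh(1)] E sgh(2) by simp
  then have "mat_word (k n) (\<phi> n) (\<sigma> g @ \<sigma> h) = mat_word (k n) (\<phi> n) (\<sigma> (g \<otimes>\<^bsub>G\<^esub> h))"
    using equiv_inv[where S=S and k="k n" and f="\<phi> n", OF U' rel RS] sg sh by simp
  then show ?thesis unfolding phiU_def using mw_append[where S=S and k="k n" and f="\<phi> n", OF U' sg(1) sh(1)] by simp
qed

lemma hom_lim: assumes g: "g \<in> carrier G" and h: "h \<in> carrier G"
  shows "((\<lambda>n. nrm (Phi (g \<otimes>\<^bsub>G\<^esub> h) n - Phi g n * Phi h n)) \<longlongrightarrow> 0) U"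
proof -
  have gh: "g \<otimes>\<^bsub>G\<^esub> h \<in> carrier G" using mcl g h by auto
  obtain Cg where Cg: "eventually (\<lambda>n. nrm (Phi g n - \<phi>t n g) \<le> Cg * d n) U" using close'[OF g] by blast
  obtain Ch where Ch: "eventually (\<lambda>n. nrm (Phi h n - \<phi>t n h) \<le> Ch * d n) U" using close'[OF h] by blast
  obtain Cgh where Cgh: "eventually (\<lambda>n. nrm (Phi (g \<otimes>\<^bsub>G\<^esub> h) n - \<phi>t n (g \<otimes>\<^bsub>G\<^esub> h)) \<le> Cgh * d n) U"
    using close'[OF gh] by blast
  obtain B where B: "eventually (\<lambda>n. nrm (cs g h n) \<le> B) U" using c_bnd[OF g h] by blast
  have ev: "eventually (\<lambda>n. nrm (Phi (g \<otimes>\<^bsub>G\<^esub> h) n - Phi g n * Phi h n) \<le> (Cgh + B + Ch + Cg) * d n) U"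
    using Cg Ch Cgh B
  proof eventually_elim
    case (elim n)
    let ?T = "\<phi>t n (g \<otimes>\<^bsub>G\<^esub> h)" and ?Tg = "\<phi>t n g" and ?Th = "\<phi>t n h"
    show ?case
    proof (cases "d n > 0")
      case False
      then have "d n = 0" using d_nonneg[of n] by simp
      moreover have "Phi g n * Phi h n - Phi g n * Phi h n = 0\<^sub>m (k n) (k n)"
        by (rule minus_r_inv_mat[OF mult_carrier_mat[OF Phi_car[OF g] Phi_car[OF h]]])
      ultimately show ?thesis using defect0[OF _ g h, of n] n_zero[of "k n"] by simp
    next
      case True
      have cT: "?T \<in> carrier_mat (k n) (k n)" "?Tg \<in> carrier_mat (k n) (k n)" "?Th \<in> carrier_mat (k n) (k n)"
        using g h gh by auto
      have cP: "Phi (g \<otimes>\<^bsub>G\<^esub> h) n \<in> carrier_mat (k n) (k n)" "Phi g n \<in> carrier_mat (k n) (k n)" "Phi h n \<in> carrier_mat (k n) (k n)"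
        using g h gh by auto
      have cm: "cmod (1 / complex_of_real (d n)) = 1 / d n" using True by (simp add: norm_divide)
      have M: "nrm (?Tg * ?Th - ?T) = d n * nrm (cs g h n)"
        using cm cs_pos[OF True, of g h] n_smult[of "?Tg * ?Th - ?T" "k n"] cT True by simp
      have cGH: "Phi g n * Phi h n \<in> carrier_mat (k n) (k n)" by (rule mult_carrier_mat[OF cP(2,3)])
      have cTP: "?Tg * Phi h n \<in> carrier_mat (k n) (k n)" by (rule mult_carrier_mat[OF cT(2) cP(3)])
      have cTT: "?Tg * ?Th \<in> carrier_mat (k n) (k n)" by (rule mult_carrier_mat[OF cT(2,3)])
      note t1a = n_tri[OF cP(1) cT(1) cGH] and t1b = n_tri[OF cT(1) cTP cGH]
      note t2 = n_tri[OF cT(1) cTT cTP]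
      have "nrm (?Tg * ?Th - ?Tg * Phi h n) = nrm (?Tg * (?Th - Phi h n))"
        using mult_minus_distrib_mat[of ?Tg "k n" "k n" ?Th "k n" "Phi h n"] cT cP by simp
      also have "\<dots> = nrm (Phi h n - ?Th)" using n_unit_l[OF phit_unitary[OF g]] n_minus_sym cT cP by simp
      finally have t3: "nrm (?Tg * ?Th - ?Tg * Phi h n) = nrm (Phi h n - ?Th)" .
      have "nrm (?Tg * Phi h n - Phi g n * Phi h n) = nrm ((?Tg - Phi g n) * Phi h n)"
        using minus_mult_distrib_mat[of ?Tg "k n" "k n" "Phi g n" "Phi h n" "k n"] cT cP by simp
      also have "\<dots> = nrm (Phi g n - ?Tg)" using n_unit_r[OF Phi_unit[OF h]] n_minus_sym cT cP by simp
      finally have t4: "nrm (?Tg * Phi h n - Phi g n * Phi h n) = nrm (Phi g n - ?Tg)" .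
      have t5: "nrm (?T - ?Tg * ?Th) = d n * nrm (cs g h n)" using M n_minus_sym[OF cT(1) cTT] by simp
      have "d n * nrm (cs g h n) \<le> d n * B" using elim(4) True by (simp add: mult_left_mono)
      then show ?thesis using t1a t1b t2 t3 t4 t5 elim(1,2,3) by (simp add: algebra_simps)
    qed
  qed
  show ?thesis
  proof (rule tendsto0_bound[OF ev])
    show "((\<lambda>n. (Cgh + B + Ch + Cg) * d n) \<longlongrightarrow> 0) U"
      using tendsto_mult[OF tendsto_const def_lim, of "Cgh + B + Ch + Cg"] by simp
    show "0 \<le> nrm (Phi (g \<otimes>\<^bsub>G\<^esub> h) n - Phi g n * Phi h n)" for n
      using g h gh by (intro n_nonneg) auto
  qed
qed

end

lemma L_unitsq: assumes Y: "unitary_mat k Y"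
  shows "(Y - 1\<^sub>m k) + mat_adjoint (Y - 1\<^sub>m k) = - (mat_adjoint (Y - 1\<^sub>m k) * (Y - 1\<^sub>m k))"
proof -
  have Yc: "Y \<in> carrier_mat k k" and Ya: "mat_adjoint Y \<in> carrier_mat k k" using Y unitary_carrier by auto
  have a: "mat_adjoint (Y - 1\<^sub>m k) = mat_adjoint Y - 1\<^sub>m k" using adj_minus[OF Yc one_carrier_mat] by simp
  have "(mat_adjoint Y - 1\<^sub>m k) * (Y - 1\<^sub>m k) = mat_adjoint Y * (Y - 1\<^sub>m k) - 1\<^sub>m k * (Y - 1\<^sub>m k)"
    by (rule minus_mult_distrib_mat) (use Yc Ya in auto)
  also have "mat_adjoint Y * (Y - 1\<^sub>m k) = mat_adjoint Y * Y - mat_adjoint Y * 1\<^sub>m k"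
    by (rule mult_minus_distrib_mat) (use Yc Ya in auto)
  also have "\<dots> = 1\<^sub>m k - mat_adjoint Y" using unitary_cancels(4)[OF Y Yc] right_mult_one_mat[OF Ya] by simp
  also have "1\<^sub>m k * (Y - 1\<^sub>m k) = Y - 1\<^sub>m k" using Yc by simp
  finally have p: "(mat_adjoint Y - 1\<^sub>m k) * (Y - 1\<^sub>m k) = 1\<^sub>m k - mat_adjoint Y - (Y - 1\<^sub>m k)" .
  show ?thesis unfolding a p using Yc Ya by (intro eq_matI) auto
qed

context nrmloc begin

lemma L_S: assumes T: "unitary_mat k T" and W: "unitary_mat k W" and P: "P \<in> carrier_mat k k" and d: "d > 0"
  and c: "c = (1 / complex_of_real d) \<cdot>\<^sub>m (W - T)"
  shows "nrm (c * mat_adjoint P + mat_adjoint (c * mat_adjoint P)) \<le> d * nrm c ^ 2 + 2 * nrm c * nrm (P - T)"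
proof -
  have Tc: "T \<in> carrier_mat k k" and Wc: "W \<in> carrier_mat k k" using T W unitary_carrier by auto
  have Ta: "mat_adjoint T \<in> carrier_mat k k" and Pa: "mat_adjoint P \<in> carrier_mat k k" using Tc P by auto
  define M where "M = W - T"
  define e where "e = P - T"
  have Mc: "M \<in> carrier_mat k k" and ec: "e \<in> carrier_mat k k" unfolding M_def e_def using Wc Tc P by auto
  have Ma: "mat_adjoint M \<in> carrier_mat k k" and ea: "mat_adjoint e \<in> carrier_mat k k" using Mc ec by auto
  have cc: "c \<in> carrier_mat k k" unfolding c M_def[symmetric] using Mc by simp
  define q where "q = 1 / complex_of_real d"
  have cq: "cnj q = q" unfolding q_def by simp
  have "c * mat_adjoint P = q \<cdot>\<^sub>m (M * mat_adjoint P)" unfolding c q_def[symmetric] M_def[symmetric]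
    by (rule mult_smult_assoc_mat[OF Mc Pa])
  moreover have "mat_adjoint (q \<cdot>\<^sub>m (M * mat_adjoint P)) = q \<cdot>\<^sub>m (P * mat_adjoint M)"
    unfolding adj_smult cq using adj_mult[OF Mc Pa] by simp
  ultimately have "c * mat_adjoint P + mat_adjoint (c * mat_adjoint P) = q \<cdot>\<^sub>m (M * mat_adjoint P + P * mat_adjoint M)"
    using add_smult_distrib_left_mat[of "M * mat_adjoint P" k k "P * mat_adjoint M" q] Mc Pa P Ma by simp
  then have n1: "nrm (c * mat_adjoint P + mat_adjoint (c * mat_adjoint P)) = (1 / d) * nrm (M * mat_adjoint P + P * mat_adjoint M)"
    using n_smult[of "M * mat_adjoint P + P * mat_adjoint M" k q] Mc Pa P Ma d unfolding q_def by (simp add: norm_divide)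
  define Z where "Z = M * mat_adjoint T"
  have Zc: "Z \<in> carrier_mat k k" and Za: "mat_adjoint Z \<in> carrier_mat k k" unfolding Z_def using Mc Ta by auto
  have Zadj: "mat_adjoint Z = T * mat_adjoint M" unfolding Z_def using adj_mult[OF Mc Ta] by simp
  have Pe: "P = T + e" unfolding e_def using P Tc by (intro eq_matI) auto
  have Pa': "mat_adjoint P = mat_adjoint T + mat_adjoint e" unfolding Pe using adj_add[OF Tc ec] .
  have "M * mat_adjoint P = Z + M * mat_adjoint e" unfolding Pa' Z_def
    by (rule mult_add_distrib_mat[OF Mc Ta ea])
  moreover have "P * mat_adjoint M = mat_adjoint Z + e * mat_adjoint M" unfolding Pe Zadj
    by (rule add_mult_distrib_mat[OF Tc ec Ma])
  ultimately have sum: "M * mat_adjoint P + P * mat_adjoint M = (Z + mat_adjoint Z) + (M * mat_adjoint e + e * mat_adjoint M)"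
    using Zc Za Mc ea ec Ma by (intro eq_matI) auto
  have Y: "unitary_mat k (W * mat_adjoint T)" using unitary_mult[OF W unitary_adj[OF T]] .
  have "Z = W * mat_adjoint T - T * mat_adjoint T" unfolding Z_def M_def by (rule minus_mult_distrib_mat[OF Wc Tc Ta])
  then have ZY: "Z = W * mat_adjoint T - 1\<^sub>m k" using unitary_cancels(3)[OF T Tc] by simp
  have nZ: "nrm Z = nrm M" unfolding Z_def using n_unit_r[OF unitary_adj[OF T] Mc] .
  have "nrm (Z + mat_adjoint Z) = nrm (mat_adjoint Z * Z)"
    using L_unitsq[OF Y] ZY[symmetric] n_uminus[of "mat_adjoint Z * Z" k] Zc Za by simp
  also have "\<dots> \<le> nrm (mat_adjoint Z) * nrm Z" by (rule n_mult[OF Za Zc])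
  also have "\<dots> = nrm M ^ 2" using n_adj[OF Zc] nZ by (simp add: power2_eq_square)
  finally have s1: "nrm (Z + mat_adjoint Z) \<le> nrm M ^ 2" .
  have s2: "nrm (M * mat_adjoint e) \<le> nrm M * nrm e" using n_mult[OF Mc ea] n_adj[OF ec] by simp
  have s3: "nrm (e * mat_adjoint M) \<le> nrm M * nrm e" using n_mult[OF ec Ma] n_adj[OF Mc] by (simp add: mult.commute)
  have "nrm (M * mat_adjoint P + P * mat_adjoint M) \<le> nrm (Z + mat_adjoint Z) + (nrm (M * mat_adjoint e) + nrm (e * mat_adjoint M))"
    unfolding sum using n_add[of "Z + mat_adjoint Z" k "M * mat_adjoint e + e * mat_adjoint M"]
      n_add[of "M * mat_adjoint e" k "e * mat_adjoint M"] Zc Za Mc ea ec Ma by fastforce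
  also have "\<dots> \<le> nrm M ^ 2 + 2 * nrm M * nrm e" using s1 s2 s3 by simp
  finally have n2: "nrm (M * mat_adjoint P + P * mat_adjoint M) \<le> nrm M ^ 2 + 2 * nrm M * nrm e" .
  have nM: "nrm M = d * nrm c" using c n_smult[OF Mc, of "1 / complex_of_real d"] d unfolding M_def[symmetric] by (simp add: norm_divide)
  have "nrm (c * mat_adjoint P + mat_adjoint (c * mat_adjoint P)) \<le> (1 / d) * (nrm M ^ 2 + 2 * nrm M * nrm e)"
    unfolding n1 using n2 d by (simp add: divide_right_mono)
  also have "\<dots> = d * nrm c ^ 2 + 2 * nrm c * nrm e" unfolding nM using d by (simp add: field_simps power2_eq_square)
  finally show ?thesis unfolding e_def .
qed

end

lemma mult_sq[simp]: "A \<in> carrier_mat n n \<Longrightarrow> B \<in> carrier_mat n n \<Longrightarrow> A * B \<in> carrier_mat n n"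
  by (rule mult_carrier_mat)

lemma smult_zero_mat': "a \<cdot>\<^sub>m (0\<^sub>m m n :: complex mat) = 0\<^sub>m m n" by (intro eq_matI) auto

context prop33 begin

lemma one_car: "\<one>\<^bsub>G\<^esub> \<in> carrier G" using grp by (simp add: group.is_monoid monoid.one_closed)

lemma cs_is_zero: assumes g: "g \<in> carrier G" and h: "h \<in> carrier G"
  and eq: "\<And>n. \<phi>t n g * \<phi>t n h = \<phi>t n (g \<otimes>\<^bsub>G\<^esub> h)"
  shows "cs g h n = 0\<^sub>m (k n) (k n)" "al g h n = 0\<^sub>m (k n) (k n)"
proof -
  have "\<phi>t n (g \<otimes>\<^bsub>G\<^esub> h) - \<phi>t n (g \<otimes>\<^bsub>G\<^esub> h) = 0\<^sub>m (k n) (k n)"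
    by (rule minus_r_inv_mat[OF phit_car[OF mcl[OF g h]]])
  then show c: "cs g h n = 0\<^sub>m (k n) (k n)" unfolding c_seq_def eq by (simp add: smult_zero_mat')
  show "al g h n = 0\<^sub>m (k n) (k n)" unfolding al_eq c using mcl[OF g h] by simp
qed

lemma claim1: "eqU U nrm (\<beta> \<one>\<^bsub>G\<^esub>) (\<lambda>n. 0\<^sub>m (k n) (k n))"
proof -
  let ?e = "\<one>\<^bsub>G\<^esub>"
  have e: "?e \<in> carrier G" by (rule one_car)
  have ee: "?e \<otimes>\<^bsub>G\<^esub> ?e = ?e" using grp e by (simp add: group.is_monoid monoid.l_one)
  have z: "al ?e ?e n = 0\<^sub>m (k n) (k n)" for n
    using cs_is_zero(2)[OF e e, of n] phit_one ee by simp
  have "nrm (\<beta> ?e n - 0\<^sub>m (k n) (k n)) = nrm (al ?e ?e n - Rhs ?e ?e n)" for n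
  proof -
    let ?X = "Phi ?e n * \<beta> ?e n * mat_adjoint (Phi ?e n)"
    have Xc: "?X \<in> carrier_mat (k n) (k n)" using e by simp
    have "al ?e ?e n - Rhs ?e ?e n = - ?X" unfolding z ee using Xc e by (intro eq_matI) auto
    moreover have "\<beta> ?e n - 0\<^sub>m (k n) (k n) = \<beta> ?e n" using e by (intro eq_matI) auto
    ultimately show ?thesis using n_uminus[OF Xc] nrm_conj[OF e beta_car[OF e]] by simp
  qed
  then show ?thesis unfolding eqU_def using E_lim[OF e e] by simp
qed

lemma claim2: assumes g: "g \<in> carrier G"
  shows "eqU U nrm (\<beta> g) (\<lambda>n. - (Phi g n * \<beta> (inv\<^bsub>G\<^esub> g) n * mat_adjoint (Phi g n)))"
proof -
  let ?e = "\<one>\<^bsub>G\<^esub>" and ?i = "inv\<^bsub>G\<^esub> g"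
  have e: "?e \<in> carrier G" by (rule one_car)
  have i: "?i \<in> carrier G" using grp g by (simp add: group.inv_closed)
  have gi: "g \<otimes>\<^bsub>G\<^esub> ?i = ?e" using grp g by (simp add: group.r_inv)
  have eq: "\<phi>t n g * \<phi>t n ?i = \<phi>t n (g \<otimes>\<^bsub>G\<^esub> ?i)" for n
    unfolding gi phit_one phit_inv[OF g] using unitary_cancels(3)[OF phit_unitary[OF g] phit_car[OF g]] by simp
  have z: "al g ?i n = 0\<^sub>m (k n) (k n)" for n using cs_is_zero(2)[OF g i eq] .
  have lim1: "((\<lambda>n. nrm (al g ?i n - Rhs g ?i n)) \<longlongrightarrow> 0) U" using E_lim[OF g i] .
  have lim2: "((\<lambda>n. nrm (\<beta> ?e n - 0\<^sub>m (k n) (k n))) \<longlongrightarrow> 0) U" using claim1 unfolding eqU_def .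
  have bnd: "nrm (\<beta> g n - - (Phi g n * \<beta> ?i n * mat_adjoint (Phi g n))) \<le>
     nrm (al g ?i n - Rhs g ?i n) + nrm (\<beta> ?e n - 0\<^sub>m (k n) (k n))" for n
  proof -
    let ?X = "Phi g n * \<beta> ?i n * mat_adjoint (Phi g n)"
    have Xc: "?X \<in> carrier_mat (k n) (k n)" using g i by simp
    have "\<beta> g n - - ?X = - (al g ?i n - Rhs g ?i n) + (\<beta> ?e n - 0\<^sub>m (k n) (k n))"
      unfolding z gi using Xc g e by (intro eq_matI) auto
    moreover have "nrm (- (al g ?i n - Rhs g ?i n) + (\<beta> ?e n - 0\<^sub>m (k n) (k n))) \<le>
       nrm (- (al g ?i n - Rhs g ?i n)) + nrm (\<beta> ?e n - 0\<^sub>m (k n) (k n))"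
      by (rule n_add) (use g i e in auto)
    moreover have "nrm (- (al g ?i n - Rhs g ?i n)) = nrm (al g ?i n - Rhs g ?i n)"
      by (rule n_uminus) (use g i in auto)
    ultimately show ?thesis by simp
  qed
  show ?thesis unfolding eqU_def
  proof (rule tendsto0_bound[OF _ _ n_nonneg])
    show "eventually (\<lambda>n. nrm (\<beta> g n - - (Phi g n * \<beta> ?i n * mat_adjoint (Phi g n))) \<le>
     nrm (al g ?i n - Rhs g ?i n) + nrm (\<beta> ?e n - 0\<^sub>m (k n) (k n))) U" using bnd by simp
    show "((\<lambda>n. nrm (al g ?i n - Rhs g ?i n) + nrm (\<beta> ?e n - 0\<^sub>m (k n) (k n))) \<longlongrightarrow> 0) U"
      using tendsto_add[OF lim1 lim2] by simp
    show "\<beta> g n - - (Phi g n * \<beta> ?i n * mat_adjoint (Phi g n)) \<in> carrier_mat (k n) (k n)" for n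
      using g i by simp
  qed
qed

end

context prop33 begin

lemma claim3: assumes g: "g \<in> carrier G" and h: "h \<in> carrier G"
  shows "eqU U nrm (cs g h)
          (\<lambda>n. Phi g n * \<beta> h n * Phi h n
               - \<beta> (g \<otimes>\<^bsub>G\<^esub> h) n * Phi (g \<otimes>\<^bsub>G\<^esub> h) n
               + \<beta> g n * Phi (g \<otimes>\<^bsub>G\<^esub> h) n)"
proof -
  have gh: "g \<otimes>\<^bsub>G\<^esub> h \<in> carrier G" using mcl g h by auto
  obtain Ch where Ch: "\<And>n. nrm (\<beta> h n) \<le> Ch" using beta_bnd[OF h] by blast
  have bnd: "nrm (cs g h n - (Phi g n * \<beta> h n * Phi h n - \<beta> (g \<otimes>\<^bsub>G\<^esub> h) n * Phi (g \<otimes>\<^bsub>G\<^esub> h) n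
               + \<beta> g n * Phi (g \<otimes>\<^bsub>G\<^esub> h) n)) \<le>
        nrm (al g h n - Rhs g h n) + Ch * nrm (Phi (g \<otimes>\<^bsub>G\<^esub> h) n - Phi g n * Phi h n)" for n
  proof -
    define A where "A = Phi g n"
    define Bh where "Bh = \<beta> h n"
    define Bgh where "Bgh = \<beta> (g \<otimes>\<^bsub>G\<^esub> h) n"
    define Bg where "Bg = \<beta> g n"
    define P where "P = Phi (g \<otimes>\<^bsub>G\<^esub> h) n"
    define H where "H = Phi h n"
    define C where "C = cs g h n"
    define Al where "Al = al g h n"
    define X where "X = A * Bh * mat_adjoint A"
    define RR where "RR = Rhs g h n"
    have Au: "unitary_mat (k n) A" and Pu: "unitary_mat (k n) P" unfolding A_def P_def using Phi_unit g gh by auto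
    have c: "A \<in> carrier_mat (k n) (k n)" "Bh \<in> carrier_mat (k n) (k n)" "Bgh \<in> carrier_mat (k n) (k n)"
      "Bg \<in> carrier_mat (k n) (k n)" "P \<in> carrier_mat (k n) (k n)" "H \<in> carrier_mat (k n) (k n)"
      "C \<in> carrier_mat (k n) (k n)" "Al \<in> carrier_mat (k n) (k n)" "mat_adjoint A \<in> carrier_mat (k n) (k n)"
      "mat_adjoint P \<in> carrier_mat (k n) (k n)" "X \<in> carrier_mat (k n) (k n)" "RR \<in> carrier_mat (k n) (k n)"
      unfolding A_def Bh_def Bgh_def Bg_def P_def H_def C_def Al_def X_def RR_def using g h gh by auto
    have RR: "RR = X - Bgh + Bg" unfolding RR_def X_def A_def Bh_def Bgh_def Bg_def by simp
    have Al: "Al = C * mat_adjoint P" unfolding Al_def C_def P_def al_eq by simp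
    have e1: "Al * P = C"
    proof -
      have "C * mat_adjoint P * P = C * (mat_adjoint P * P)" by (rule assoc_mult_mat[OF c(7) c(10) c(5)])
      also have "\<dots> = C" using unitary_cancels(4)[OF Pu c(5)] right_mult_one_mat[OF c(7)] by simp
      finally show ?thesis unfolding Al .
    qed
    have e2: "RR * P = X * P - Bgh * P + Bg * P"
    proof -
      have "RR * P = (X - Bgh) * P + Bg * P" unfolding RR by (rule add_mult_distrib_mat) (use c in auto)
      also have "(X - Bgh) * P = X * P - Bgh * P" by (rule minus_mult_distrib_mat) (use c in auto)
      finally show ?thesis .
    qed
    have e3: "(Al - RR) * P = Al * P - RR * P" by (rule minus_mult_distrib_mat) (use c in auto)
    have e4: "(A * Bh) * (mat_adjoint A * (P - A * H)) = X * P - A * Bh * H"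
    proof -
      have "mat_adjoint A * (P - A * H) = mat_adjoint A * P - mat_adjoint A * (A * H)"
        by (rule mult_minus_distrib_mat) (use c in auto)
      also have "mat_adjoint A * (A * H) = H" using unitary_cancels(2)[OF Au c(6)] .
      finally have "(A * Bh) * (mat_adjoint A * (P - A * H)) = (A * Bh) * (mat_adjoint A * P - H)" by simp
      also have "\<dots> = (A * Bh) * (mat_adjoint A * P) - (A * Bh) * H"
        by (rule mult_minus_distrib_mat) (use c in auto)
      also have "(A * Bh) * (mat_adjoint A * P) = X * P"
        unfolding X_def by (rule assoc_mult_mat[symmetric, of "A * Bh" "k n" "k n" "mat_adjoint A" "k n" P "k n"]) (use c in auto)
      finally show ?thesis .
    qed
    have "C - (A * Bh * H - Bgh * P + Bg * P) = (Al - RR) * P + (A * Bh) * (mat_adjoint A * (P - A * H))"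
      unfolding e3 e1 e2 e4 using c by (intro eq_matI) auto
    then have "nrm (C - (A * Bh * H - Bgh * P + Bg * P)) \<le> nrm ((Al - RR) * P) + nrm ((A * Bh) * (mat_adjoint A * (P - A * H)))"
      using n_add[of "(Al - RR) * P" "k n" "(A * Bh) * (mat_adjoint A * (P - A * H))"] c by simp
    moreover have "nrm ((Al - RR) * P) = nrm (Al - RR)" using n_unit_r[OF Pu, of "Al - RR"] c by simp
    moreover have "nrm ((A * Bh) * (mat_adjoint A * (P - A * H))) \<le> nrm (A * Bh) * nrm (mat_adjoint A * (P - A * H))"
      by (rule n_mult) (use c in auto)
    moreover have "nrm (A * Bh) * nrm (mat_adjoint A * (P - A * H)) = nrm Bh * nrm (P - A * H)"
      using n_unit_l[OF Au c(2)] n_unit_l[OF unitary_adj[OF Au], of "P - A * H"] c by simp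
    moreover have "nrm Bh * nrm (P - A * H) \<le> Ch * nrm (P - A * H)"
      using Ch[of n] n_nonneg[of "P - A * H" "k n"] c unfolding Bh_def by (simp add: mult_right_mono)
    ultimately have "nrm (C - (A * Bh * H - Bgh * P + Bg * P)) \<le> nrm (Al - RR) + Ch * nrm (P - A * H)"
      by linarith
    then show ?thesis unfolding A_def Bh_def Bgh_def Bg_def P_def H_def C_def Al_def RR_def .
  qed
  show ?thesis unfolding eqU_def
  proof (rule tendsto0_bound[OF _ _ n_nonneg])
    show "eventually (\<lambda>n. nrm (cs g h n - (Phi g n * \<beta> h n * Phi h n - \<beta> (g \<otimes>\<^bsub>G\<^esub> h) n * Phi (g \<otimes>\<^bsub>G\<^esub> h) n
               + \<beta> g n * Phi (g \<otimes>\<^bsub>G\<^esub> h) n)) \<le>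
        nrm (al g h n - Rhs g h n) + Ch * nrm (Phi (g \<otimes>\<^bsub>G\<^esub> h) n - Phi g n * Phi h n)) U"
      using bnd by simp
    show "((\<lambda>n. nrm (al g h n - Rhs g h n) + Ch * nrm (Phi (g \<otimes>\<^bsub>G\<^esub> h) n - Phi g n * Phi h n)) \<longlongrightarrow> 0) U"
      using tendsto_add[OF E_lim[OF g h] tendsto_mult[OF tendsto_const hom_lim[OF g h], of Ch]] by simp
    show "cs g h n - (Phi g n * \<beta> h n * Phi h n - \<beta> (g \<otimes>\<^bsub>G\<^esub> h) n * Phi (g \<otimes>\<^bsub>G\<^esub> h) n
               + \<beta> g n * Phi (g \<otimes>\<^bsub>G\<^esub> h) n) \<in> carrier_mat (k n) (k n)" for n
      using g h gh by simp
  qed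
qed

end

context prop33 begin

lemma claimS: assumes g: "g \<in> carrier G" and h: "h \<in> carrier G"
  shows "((\<lambda>n. nrm (al g h n + mat_adjoint (al g h n))) \<longlongrightarrow> 0) U"
proof -
  have gh: "g \<otimes>\<^bsub>G\<^esub> h \<in> carrier G" using mcl g h by auto
  obtain Cgh where Cgh: "eventually (\<lambda>n. nrm (Phi (g \<otimes>\<^bsub>G\<^esub> h) n - \<phi>t n (g \<otimes>\<^bsub>G\<^esub> h)) \<le> Cgh * d n) U"
    using close'[OF gh] by blast
  obtain B where B: "eventually (\<lambda>n. nrm (cs g h n) \<le> B) U" using c_bnd[OF g h] by blast
  have ev: "eventually (\<lambda>n. nrm (al g h n + mat_adjoint (al g h n)) \<le> d n * B ^ 2 + 2 * B * (Cgh * d n)) U"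
    using Cgh B
  proof eventually_elim
    case (elim n)
    show ?case
    proof (cases "d n > 0")
      case False
      then have "d n = 0" using d_nonneg[of n] by simp
      moreover have "al g h n = 0\<^sub>m (k n) (k n)" unfolding al_eq cs_zero[OF False] using gh by simp
      ultimately show ?thesis using n_zero[of "k n"] by simp
    next
      case True
      have W: "unitary_mat (k n) (\<phi>t n g * \<phi>t n h)" using unitary_mult[OF phit_unitary[OF g] phit_unitary[OF h]] .
      have L: "nrm (al g h n + mat_adjoint (al g h n)) \<le> d n * nrm (cs g h n) ^ 2 + 2 * nrm (cs g h n) * nrm (Phi (g \<otimes>\<^bsub>G\<^esub> h) n - \<phi>t n (g \<otimes>\<^bsub>G\<^esub> h))"
        unfolding al_eq by (rule L_S[OF phit_unitary[OF gh] W Phi_car[OF gh] True cs_pos[OF True]])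
      have c0: "0 \<le> nrm (cs g h n)" by (rule n_nonneg[OF cs_car[OF g h]])
      have e0: "0 \<le> nrm (Phi (g \<otimes>\<^bsub>G\<^esub> h) n - \<phi>t n (g \<otimes>\<^bsub>G\<^esub> h))"
        by (rule n_nonneg[OF minus_carrier_mat[OF phit_car[OF gh]]])
      have "nrm (cs g h n) ^ 2 \<le> B ^ 2" by (rule power_mono[OF elim(2) c0])
      then have 1: "d n * nrm (cs g h n) ^ 2 \<le> d n * B ^ 2" using True by (simp add: mult_left_mono)
      have B0: "0 \<le> B" using c0 elim(2) by linarith
      have "nrm (cs g h n) * nrm (Phi (g \<otimes>\<^bsub>G\<^esub> h) n - \<phi>t n (g \<otimes>\<^bsub>G\<^esub> h)) \<le> B * (Cgh * d n)"
        by (rule mult_mono[OF elim(2) elim(1) B0 e0])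
      then show ?thesis using L 1 by linarith
    qed
  qed
  show ?thesis
  proof (rule tendsto0_bound[OF ev])
    show "((\<lambda>n. d n * B ^ 2 + 2 * B * (Cgh * d n)) \<longlongrightarrow> 0) U"
      using tendsto_add[OF tendsto_mult[OF def_lim tendsto_const, of "B^2"]
          tendsto_mult[OF tendsto_const tendsto_mult[OF tendsto_const def_lim, of Cgh], of "2 * B"]] by simp
    show "0 \<le> nrm (al g h n + mat_adjoint (al g h n))" for n
      by (rule n_nonneg[OF add_carrier_mat[OF adj_carrier[OF al_car[OF g h]]]])
  qed
qed

definition "bp g n = (1/2 :: complex) \<cdot>\<^sub>m (\<beta> g n - mat_adjoint (\<beta> g n))"

lemma bp_car[simp]: "g \<in> carrier G \<Longrightarrow> bp g n \<in> carrier_mat (k n) (k n)"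
  unfolding bp_def by simp

lemma bp_nrm: assumes g: "g \<in> carrier G" shows "nrm (bp g n) \<le> nrm (\<beta> g n)"
proof -
  have "nrm (bp g n) = 1/2 * nrm (\<beta> g n - mat_adjoint (\<beta> g n))"
    unfolding bp_def using n_smult[of "\<beta> g n - mat_adjoint (\<beta> g n)" "k n" "1/2"] g by simp
  also have "nrm (\<beta> g n - mat_adjoint (\<beta> g n)) \<le> nrm (\<beta> g n) + nrm (mat_adjoint (\<beta> g n))"
    by (rule n_minus) (use g in auto)
  then have "1/2 * nrm (\<beta> g n - mat_adjoint (\<beta> g n)) \<le> nrm (\<beta> g n)" using n_adj[of "\<beta> g n" "k n"] g by simp
  finally show ?thesis .
qed

lemma bp_skew: assumes g: "g \<in> carrier G" shows "mat_adjoint (bp g n) - - bp g n = 0\<^sub>m (k n) (k n)"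
proof -
  have "mat_adjoint (bp g n) = (1/2 :: complex) \<cdot>\<^sub>m (mat_adjoint (\<beta> g n) - \<beta> g n)"
    unfolding bp_def adj_smult using adj_minus[of "\<beta> g n" "k n" "k n" "mat_adjoint (\<beta> g n)"] g by simp
  then show ?thesis unfolding bp_def using g by (intro eq_matI) (auto simp: algebra_simps)
qed

lemma Rhs_bp: assumes g: "g \<in> carrier G" and h: "h \<in> carrier G"
  shows "Phi g n * bp h n * mat_adjoint (Phi g n) - bp (g \<otimes>\<^bsub>G\<^esub> h) n + bp g n
     = (1/2 :: complex) \<cdot>\<^sub>m (Rhs g h n - mat_adjoint (Rhs g h n))"
proof -
  have gh: "g \<otimes>\<^bsub>G\<^esub> h \<in> carrier G" using mcl g h by auto
  define A where "A = Phi g n"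
  define Bh where "Bh = \<beta> h n"
  define Bgh where "Bgh = \<beta> (g \<otimes>\<^bsub>G\<^esub> h) n"
  define Bg where "Bg = \<beta> g n"
  have c: "A \<in> carrier_mat (k n) (k n)" "Bh \<in> carrier_mat (k n) (k n)" "Bgh \<in> carrier_mat (k n) (k n)"
      "Bg \<in> carrier_mat (k n) (k n)" "mat_adjoint A \<in> carrier_mat (k n) (k n)"
      "mat_adjoint Bh \<in> carrier_mat (k n) (k n)" "mat_adjoint Bgh \<in> carrier_mat (k n) (k n)"
      "mat_adjoint Bg \<in> carrier_mat (k n) (k n)"
    unfolding A_def Bh_def Bgh_def Bg_def using g h gh by auto
  have e1: "A * ((1/2 :: complex) \<cdot>\<^sub>m (Bh - mat_adjoint Bh)) * mat_adjoint A
      = (1/2 :: complex) \<cdot>\<^sub>m (A * Bh * mat_adjoint A - A * mat_adjoint Bh * mat_adjoint A)"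
  proof -
    have "A * ((1/2 :: complex) \<cdot>\<^sub>m (Bh - mat_adjoint Bh)) = (1/2 :: complex) \<cdot>\<^sub>m (A * (Bh - mat_adjoint Bh))"
      by (rule mult_smult_distrib) (use c in auto)
    also have "A * (Bh - mat_adjoint Bh) = A * Bh - A * mat_adjoint Bh" by (rule mult_minus_distrib_mat) (use c in auto)
    finally have "A * ((1/2 :: complex) \<cdot>\<^sub>m (Bh - mat_adjoint Bh)) * mat_adjoint A
       = ((1/2 :: complex) \<cdot>\<^sub>m (A * Bh - A * mat_adjoint Bh)) * mat_adjoint A" by simp
    also have "\<dots> = (1/2 :: complex) \<cdot>\<^sub>m ((A * Bh - A * mat_adjoint Bh) * mat_adjoint A)"
      by (rule mult_smult_assoc_mat) (use c in auto)
    also have "(A * Bh - A * mat_adjoint Bh) * mat_adjoint A = A * Bh * mat_adjoint A - A * mat_adjoint Bh * mat_adjoint A"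
      by (rule minus_mult_distrib_mat) (use c in auto)
    finally show ?thesis .
  qed
  have e2: "mat_adjoint (A * Bh * mat_adjoint A - Bgh + Bg) = A * mat_adjoint Bh * mat_adjoint A - mat_adjoint Bgh + mat_adjoint Bg"
  proof -
    have "mat_adjoint (A * Bh * mat_adjoint A) = mat_adjoint (mat_adjoint A) * mat_adjoint (A * Bh)"
      by (rule adj_mult) (use c in auto)
    also have "\<dots> = A * (mat_adjoint Bh * mat_adjoint A)" using adj_mult[OF c(1) c(2)] by simp
    also have "\<dots> = A * mat_adjoint Bh * mat_adjoint A"
      by (rule assoc_mult_mat[symmetric, of _ "k n" "k n" _ "k n" _ "k n"]) (use c in auto)
    finally have "mat_adjoint (A * Bh * mat_adjoint A) = A * mat_adjoint Bh * mat_adjoint A" .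
    moreover have "mat_adjoint (A * Bh * mat_adjoint A - Bgh + Bg) = mat_adjoint (A * Bh * mat_adjoint A - Bgh) + mat_adjoint Bg"
      by (rule adj_add) (use c in auto)
    moreover have "mat_adjoint (A * Bh * mat_adjoint A - Bgh) = mat_adjoint (A * Bh * mat_adjoint A) - mat_adjoint Bgh"
      by (rule adj_minus) (use c in auto)
    ultimately show ?thesis by simp
  qed
  have X: "A * Bh * mat_adjoint A \<in> carrier_mat (k n) (k n)" "A * mat_adjoint Bh * mat_adjoint A \<in> carrier_mat (k n) (k n)"
    using c by auto
  show ?thesis
    unfolding bp_def A_def[symmetric] Bh_def[symmetric] Bgh_def[symmetric] Bg_def[symmetric] e1 e2
    using c X by (intro eq_matI) (auto simp: algebra_simps)
qed

lemma claim4: "\<exists>\<beta>'. alpha_coboundary U G nrm R k \<phi> \<sigma> \<phi>t \<beta>' \<and>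
          (\<forall>g\<in>carrier G. eqU U nrm (\<lambda>n. mat_adjoint (\<beta>' g n)) (\<lambda>n. - \<beta>' g n))"
proof (intro exI conjI ballI)
  show "eqU U nrm (\<lambda>n. mat_adjoint (bp g n)) (\<lambda>n. - bp g n)" if g: "g \<in> carrier G" for g
    unfolding eqU_def bp_skew[OF g] n_zero by simp
  show "alpha_coboundary U G nrm R k \<phi> \<sigma> \<phi>t bp"
    unfolding alpha_coboundary_def
  proof (intro conjI ballI)
    show "MU_seq nrm k (bp g)" if g: "g \<in> carrier G" for g
    proof -
      obtain C where "\<And>n. nrm (\<beta> g n) \<le> C" using beta_bnd[OF g] by blast
      then have "\<forall>n. nrm (bp g n) \<le> C" using bp_nrm[OF g] order_trans by blast
      then show ?thesis unfolding MU_seq_def using g by auto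
    qed
    show "eqU U nrm (al g h) (\<lambda>n. Phi g n * bp h n * mat_adjoint (Phi g n) - bp (g \<otimes>\<^bsub>G\<^esub> h) n + bp g n)"
      if g: "g \<in> carrier G" and h: "h \<in> carrier G" for g h
    proof -
      have bnd: "nrm (al g h n - (Phi g n * bp h n * mat_adjoint (Phi g n) - bp (g \<otimes>\<^bsub>G\<^esub> h) n + bp g n))
          \<le> 1/2 * nrm (al g h n + mat_adjoint (al g h n)) + nrm (al g h n - Rhs g h n)" for n
      proof -
        let ?a = "al g h n" and ?r = "Rhs g h n"
        have c: "?a \<in> carrier_mat (k n) (k n)" "?r \<in> carrier_mat (k n) (k n)" using g h by auto
        have ca: "mat_adjoint ?a \<in> carrier_mat (k n) (k n)" "mat_adjoint ?r \<in> carrier_mat (k n) (k n)" using c by auto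
        have m1: "?a - (1/2 :: complex) \<cdot>\<^sub>m (?r - mat_adjoint ?r) =
           (1/2 :: complex) \<cdot>\<^sub>m (?a + mat_adjoint ?a) + (1/2 :: complex) \<cdot>\<^sub>m ((?a - ?r) - (mat_adjoint ?a - mat_adjoint ?r))"
          using c ca carrier_matD[OF c(1)] carrier_matD[OF c(2)] by (intro eq_matI) (auto simp: algebra_simps)
        have m2: "mat_adjoint ?a - mat_adjoint ?r = mat_adjoint (?a - ?r)" using adj_minus[OF c] by simp
        have "nrm (?a - (1/2 :: complex) \<cdot>\<^sub>m (?r - mat_adjoint ?r)) = nrm ((1/2 :: complex) \<cdot>\<^sub>m (?a + mat_adjoint ?a) + (1/2 :: complex) \<cdot>\<^sub>m ((?a - ?r) - mat_adjoint (?a - ?r)))"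
          unfolding m1 m2 ..
        moreover have "nrm ((1/2 :: complex) \<cdot>\<^sub>m (?a + mat_adjoint ?a) + (1/2 :: complex) \<cdot>\<^sub>m ((?a - ?r) - mat_adjoint (?a - ?r)))
           \<le> nrm ((1/2 :: complex) \<cdot>\<^sub>m (?a + mat_adjoint ?a)) + nrm ((1/2 :: complex) \<cdot>\<^sub>m ((?a - ?r) - mat_adjoint (?a - ?r)))"
          by (rule n_add) (use c ca in auto)
        moreover have "nrm ((1/2 :: complex) \<cdot>\<^sub>m (?a + mat_adjoint ?a)) = 1/2 * nrm (?a + mat_adjoint ?a)"
          using n_smult[of "?a + mat_adjoint ?a" "k n" "1/2"] c ca by simp
        moreover have "nrm ((1/2 :: complex) \<cdot>\<^sub>m ((?a - ?r) - mat_adjoint (?a - ?r))) = 1/2 * nrm ((?a - ?r) - mat_adjoint (?a - ?r))"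
          using n_smult[of "(?a - ?r) - mat_adjoint (?a - ?r)" "k n" "1/2"] c ca by simp
        moreover have "nrm ((?a - ?r) - mat_adjoint (?a - ?r)) \<le> nrm (?a - ?r) + nrm (mat_adjoint (?a - ?r))"
          by (rule n_minus[where k="k n"]) (use c in auto)
        moreover have "nrm (mat_adjoint (?a - ?r)) = nrm (?a - ?r)" by (rule n_adj[where k="k n"]) (use c in auto)
        ultimately show ?thesis unfolding Rhs_bp[OF g h] by linarith
      qed
      show ?thesis unfolding eqU_def
      proof (rule tendsto0_bound)
        show "eventually (\<lambda>n. nrm (al g h n - (Phi g n * bp h n * mat_adjoint (Phi g n) - bp (g \<otimes>\<^bsub>G\<^esub> h) n + bp g n))
          \<le> 1/2 * nrm (al g h n + mat_adjoint (al g h n)) + nrm (al g h n - Rhs g h n)) U" using bnd by simp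
        show "((\<lambda>n. 1/2 * nrm (al g h n + mat_adjoint (al g h n)) + nrm (al g h n - Rhs g h n)) \<longlongrightarrow> 0) U"
          using tendsto_add[OF tendsto_mult[OF tendsto_const claimS[OF g h], of "1/2"] E_lim[OF g h]] by simp
        show "0 \<le> nrm (al g h n - (Phi g n * bp h n * mat_adjoint (Phi g n) - bp (g \<otimes>\<^bsub>G\<^esub> h) n + bp g n))" for n
          by (rule n_nonneg[OF minus_carrier_mat, where k="k n"]) (use g h mcl[OF g h] in auto)
      qed
    qed
  qed
qed

end

theorem proposition3p3:
  fixes U :: "nat filter"
    and G :: "('g, 'm) monoid_scheme" and S :: "'s set" and R :: "'s word set" and gen :: "'s \<Rightarrow> 'g"
    and nrm :: "complex mat \<Rightarrow> real"
    and k :: "nat \<Rightarrow> nat" and \<phi> :: "nat \<Rightarrow> 's \<Rightarrow> complex mat"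
    and \<sigma> :: "'g \<Rightarrow> 's word" and \<phi>t :: "nat \<Rightarrow> 'g \<Rightarrow> complex mat"
    and \<beta> :: "'g \<Rightarrow> nat \<Rightarrow> complex mat"
  assumes U: "nonprincipal_ultrafilter U"
    and pres: "is_presentation G S R gen" and finS: "finite S" and finR: "finite R"
    and norm: "ui_submult_norm nrm"
    and phi_unitary: "\<And>n s. s \<in> S \<Longrightarrow> unitary_mat (k n) (\<phi> n s)"
    and def_lim: "((\<lambda>n. defect nrm R (k n) (\<phi> n)) \<longlongrightarrow> 0) U"
    and sigma: "\<And>g. g \<in> carrier G \<Longrightarrow> \<sigma> g \<in> words S \<and> eval_word G gen (\<sigma> g) = g"
    and phit_unitary: "\<And>n g. g \<in> carrier G \<Longrightarrow> unitary_mat (k n) (\<phi>t n g)"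
    and phit_one: "\<And>n. \<phi>t n \<one>\<^bsub>G\<^esub> = 1\<^sub>m (k n)"
    and phit_inv: "\<And>n g. g \<in> carrier G \<Longrightarrow> \<phi>t n (inv\<^bsub>G\<^esub> g) = mat_adjoint (\<phi>t n g)"
    and phit_close: "\<And>g. g \<in> carrier G \<Longrightarrow> \<exists>C. eventually (\<lambda>n.
           nrm (mat_word (k n) (\<phi> n) (\<sigma> g) - \<phi>t n g) \<le> C * defect nrm R (k n) (\<phi> n)) U"
    and beta: "alpha_coboundary U G nrm R k \<phi> \<sigma> \<phi>t \<beta>"
  shows "eqU U nrm (\<beta> \<one>\<^bsub>G\<^esub>) (\<lambda>n. 0\<^sub>m (k n) (k n))
    \<and> (\<forall>g\<in>carrier G. eqU U nrm (\<beta> g)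
          (\<lambda>n. - (phiU k \<phi> \<sigma> g n * \<beta> (inv\<^bsub>G\<^esub> g) n * mat_adjoint (phiU k \<phi> \<sigma> g n))))
    \<and> (\<forall>g\<in>carrier G. \<forall>h\<in>carrier G. eqU U nrm (c_seq G nrm R k \<phi> \<phi>t g h)
          (\<lambda>n. phiU k \<phi> \<sigma> g n * \<beta> h n * phiU k \<phi> \<sigma> h n
               - \<beta> (g \<otimes>\<^bsub>G\<^esub> h) n * phiU k \<phi> \<sigma> (g \<otimes>\<^bsub>G\<^esub> h) n
               + \<beta> g n * phiU k \<phi> \<sigma> (g \<otimes>\<^bsub>G\<^esub> h) n))
    \<and> (\<exists>\<beta>'. alpha_coboundary U G nrm R k \<phi> \<sigma> \<phi>t \<beta>' \<and>
          (\<forall>g\<in>carrier G. eqU U nrm (\<lambda>n. mat_adjoint (\<beta>' g n)) (\<lambda>n. - \<beta>' g n)))"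
proof -
  interpret prop33 nrm U G S R gen k \<phi> \<sigma> \<phi>t \<beta>
    by (unfold_locales) (use norm pres finR phi_unitary def_lim sigma phit_unitary phit_one phit_inv phit_close beta in auto)
  show ?thesis using claim1 claim2 claim3 claim4 by blast
qed

end
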